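(* Consider $G\ge 2$ treatment levels with potential outcomes $Y(1),\dots,Y(G)$, assignment indicators $\mathbf{W}=(W_1,\dots,W_G)$ (each $W_g\in\{0,1\}$, $W_1+\cdots+W_G=1$) with $\rho_g=\mathbb{P}(W_g=1)>0$ for all $g$, and a $1\times K$ covariate vector $\mathbf{X}$. Assume $\mathbf{W}$ is independent of $(Y(1),\dots,Y(G),\mathbf{X})$, the data $\{(\mathbf{W}_i,Y_i(1),\dots,Y_i(G),\mathbf{X}_i)\}_{i=1}^N$ are i.i.d. for a nonrandom $N$, and second moments are finite. Observed outcome $Y_i=\sum_g W_{ig}Y_i(g)$. For each $g$, let $(\hat\alpha_g,\hat{\boldsymbol\beta}_g)$ be the OLS intercept and slopes from regressing $Y_i$ on $1,\mathbf{X}_i$ using only units with $W_{ig}=1$, and let $\hat\mu_g=\hat\alpha_g+\bar{\mathbf{X}}\hat{\boldsymbol\beta}_g$ with $\bar{\mathbf{X}}=N^{-1}\sum_i\mathbf{X}_i$; stack $\hat{\boldsymbol\mu}=(\hat\mu_1,\dots,\hat\mu_G)'$ and $\boldsymbol\mu=(\mu_1,\dots,\mu_G)'$. Then $$\sqrt N(\hat{\boldsymbol\mu}-\boldsymbol\mu)=N^{-1/2}\sum_{i=1}^N(\mathbf{K}_i+\mathbf{Q}_i)+o_p(1),$$ where $\mathbf{K}_i$ is the $G\times1$ vector with $g$-th entry $\dot{\mathbf{X}}_i\boldsymbol\beta_g$ and $\mathbf{Q}_i$ is the $G\times1$ vector with $g$-th entry $W_{ig}U_i(g)/\rho_g$.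
   Context: $\mu_g=\mathbb{E}[Y(g)]$, $\boldsymbol\mu_{\mathbf{X}}=\mathbb{E}(\mathbf{X})$, $\dot{\mathbf{X}}=\mathbf{X}-\boldsymbol\mu_{\mathbf{X}}$. For each $g$, $\boldsymbol\beta_g$ is the coefficient vector of the population linear projection of $Y(g)-\mu_g$ onto $\dot{\mathbf{X}}$ (equivalently the slope in the linear projection of $Y(g)$ on $1,\mathbf{X}$), and $U(g)=Y(g)-\mu_g-\dot{\mathbf{X}}\boldsymbol\beta_g$, so $\mathbb{E}[U(g)]=0$, $\mathbb{E}[\dot{\mathbf{X}}'U(g)]=\mathbf{0}$. Subscript $i$ denotes the quantity for the $i$-th draw. *)

theory Defs
  imports "HOL-Probability.Probability"
begin

(* Index conventions: treatment levels g \<in> {1..G}; covariate components j \<in> {..<K};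
   sample units i \<in> {..<N} (unit i = 0 is used as the representative population draw). *)

definition unit_space :: "nat \<Rightarrow> nat \<Rightarrow> ((nat \<Rightarrow> real) \<times> (nat \<Rightarrow> real) \<times> (nat \<Rightarrow> real)) measure" where
  "unit_space G K =
     PiM {1..G} (\<lambda>_. borel) \<Otimes>\<^sub>M (PiM {1..G} (\<lambda>_. borel) \<Otimes>\<^sub>M PiM {..<K} (\<lambda>_. borel))"

definition unit_data ::
  "nat \<Rightarrow> nat \<Rightarrow> (nat \<Rightarrow> 'a \<Rightarrow> nat \<Rightarrow> real) \<Rightarrow> (nat \<Rightarrow> 'a \<Rightarrow> nat \<Rightarrow> real)
     \<Rightarrow> (nat \<Rightarrow> 'a \<Rightarrow> nat \<Rightarrow> real) \<Rightarrow> nat \<Rightarrow> 'a \<Rightarrow> (nat \<Rightarrow> real) \<times> (nat \<Rightarrow> real) \<times> (nat \<Rightarrow> real)" where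
  "unit_data G K W Y X i = (\<lambda>\<omega>. (restrict (W i \<omega>) {1..G}, restrict (Y i \<omega>) {1..G}, restrict (X i \<omega>) {..<K}))"

definition Yobs :: "nat \<Rightarrow> (nat \<Rightarrow> 'a \<Rightarrow> nat \<Rightarrow> real) \<Rightarrow> (nat \<Rightarrow> 'a \<Rightarrow> nat \<Rightarrow> real) \<Rightarrow> nat \<Rightarrow> 'a \<Rightarrow> real" where
  "Yobs G W Y i \<omega> = (\<Sum>g\<in>{1..G}. W i \<omega> g * Y i \<omega> g)"

definition is_ols_sub ::
  "nat \<Rightarrow> nat \<Rightarrow> (nat \<Rightarrow> 'a \<Rightarrow> nat \<Rightarrow> real) \<Rightarrow> (nat \<Rightarrow> 'a \<Rightarrow> nat \<Rightarrow> real)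
     \<Rightarrow> (nat \<Rightarrow> 'a \<Rightarrow> nat \<Rightarrow> real) \<Rightarrow> nat \<Rightarrow> nat \<Rightarrow> 'a \<Rightarrow> real \<Rightarrow> (nat \<Rightarrow> real) \<Rightarrow> bool" where
  "is_ols_sub G K W Y X N g \<omega> a b \<longleftrightarrow>
     (\<forall>a' b'. (\<Sum>i\<in>{i. i < N \<and> W i \<omega> g = 1}. (Yobs G W Y i \<omega> - a - (\<Sum>j<K. X i \<omega> j * b j))\<^sup>2)
             \<le> (\<Sum>i\<in>{i. i < N \<and> W i \<omega> g = 1}. (Yobs G W Y i \<omega> - a' - (\<Sum>j<K. X i \<omega> j * b' j))\<^sup>2))"

definition is_lin_proj :: "'a measure \<Rightarrow> nat \<Rightarrow> ('a \<Rightarrow> nat \<Rightarrow> real) \<Rightarrow> ('a \<Rightarrow> real) \<Rightarrow> (nat \<Rightarrow> real) \<Rightarrow> bool" where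
  "is_lin_proj M K V Z b \<longleftrightarrow>
     (\<forall>b'. (\<integral>\<omega>. (Z \<omega> - (\<Sum>j<K. V \<omega> j * b j))\<^sup>2 \<partial>M) \<le> (\<integral>\<omega>. (Z \<omega> - (\<Sum>j<K. V \<omega> j * b' j))\<^sup>2 \<partial>M))"

(* Z_N = o_p(1): for all eps, delta > 0, eventually {|Z_N| > eps} is covered by an event of probability < delta
   (outer-probability form; coincides with convergence in probability to 0 for measurable Z_N). *)
definition o_p1 :: "'a measure \<Rightarrow> (nat \<Rightarrow> 'a \<Rightarrow> real) \<Rightarrow> bool" where
  "o_p1 M Z \<longleftrightarrow> (\<forall>\<epsilon>>0. \<forall>\<delta>>0. \<exists>N0. \<forall>N\<ge>N0. \<exists>A\<in>sets M.
       {\<omega>\<in>space M. \<epsilon> < \<bar>Z N \<omega>\<bar>} \<subseteq> A \<and> measure M A < \<delta>)"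

end

theory Submission
  imports Defs
begin


lemma (in prob_space) indep_pair:
  assumes ind: "indep_vars (\<lambda>_. borel) F UNIV" and ij: "i \<noteq> j"
  shows "indep_var borel (F i) borel (F j :: 'a \<Rightarrow> real)"
proof -
  have "indep_var borel ((\<lambda>f. f i) \<circ> (\<lambda>\<omega>. restrict (\<lambda>i. F i \<omega>) {i}))
                  borel ((\<lambda>f. f j) \<circ> (\<lambda>\<omega>. restrict (\<lambda>i. F i \<omega>) {j}))"
    using ij by (intro indep_var_compose[OF indep_var_restrict[OF ind]]) auto
  also have "((\<lambda>f. f i) \<circ> (\<lambda>\<omega>. restrict (\<lambda>i. F i \<omega>) {i})) = F i" by auto
  also have "((\<lambda>f. f j) \<circ> (\<lambda>\<omega>. restrict (\<lambda>i. F i \<omega>) {j})) = F j" by auto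
  finally show ?thesis .
qed




lemma L2_mult_integrable:
  fixes f g :: "'a \<Rightarrow> real"
  assumes [measurable]: "f \<in> borel_measurable M" "g \<in> borel_measurable M"
    and "integrable M (\<lambda>x. (f x)\<^sup>2)" "integrable M (\<lambda>x. (g x)\<^sup>2)"
  shows "integrable M (\<lambda>x. f x * g x)"
proof (rule Bochner_Integration.integrable_bound)
  show "integrable M (\<lambda>x. (f x)\<^sup>2 + (g x)\<^sup>2)" using assms by auto
  show "(\<lambda>x. f x * g x) \<in> borel_measurable M" by measurable
  show "AE x in M. norm (f x * g x) \<le> norm ((f x)\<^sup>2 + (g x)\<^sup>2)"
  proof (rule AE_I2)
    fix x
    have h2: "2 * (\<bar>f x\<bar> * \<bar>g x\<bar>) \<le> (f x)\<^sup>2 + (g x)\<^sup>2"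
      using sum_squares_bound[of "\<bar>f x\<bar>" "\<bar>g x\<bar>"] by (simp add: mult.assoc)
    have "0 \<le> \<bar>f x\<bar> * \<bar>g x\<bar>" by simp
    then have "\<bar>f x * g x\<bar> \<le> (f x)\<^sup>2 + (g x)\<^sup>2"
      unfolding abs_mult using h2 by linarith
    then show "norm (f x * g x) \<le> norm ((f x)\<^sup>2 + (g x)\<^sup>2)" by simp
  qed
qed




context prob_space begin

lemma id_integral:
  fixes F :: "nat \<Rightarrow> 'a \<Rightarrow> real"
  assumes rv: "\<And>i. F i \<in> borel_measurable M"
    and id: "\<And>i. distr M borel (F i) = distr M borel (F 0)"
    and h: "h \<in> borel_measurable borel"
  shows "integral\<^sup>L M (\<lambda>\<omega>. h (F i \<omega>)) = integral\<^sup>L M (\<lambda>\<omega>. h (F 0 \<omega>))"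
    and "integrable M (\<lambda>\<omega>. h (F i \<omega>)) \<longleftrightarrow> integrable M (\<lambda>\<omega>. (h::real\<Rightarrow>real) (F 0 \<omega>))"
proof -
  have "integral\<^sup>L M (\<lambda>\<omega>. h (F i \<omega>)) = integral\<^sup>L (distr M borel (F i)) h"
    by (rule integral_distr[symmetric]) (use rv h in auto)
  also have "\<dots> = integral\<^sup>L (distr M borel (F 0)) h" by (simp only: id[of i])
  also have "\<dots> = integral\<^sup>L M (\<lambda>\<omega>. h (F 0 \<omega>))"
    by (rule integral_distr) (use rv h in auto)
  finally show "integral\<^sup>L M (\<lambda>\<omega>. h (F i \<omega>)) = integral\<^sup>L M (\<lambda>\<omega>. h (F 0 \<omega>))" .
  have "integrable M (\<lambda>\<omega>. h (F i \<omega>)) \<longleftrightarrow> integrable (distr M borel (F i)) h"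
    by (rule integrable_distr_eq[symmetric]) (use rv h in auto)
  also have "\<dots> \<longleftrightarrow> integrable (distr M borel (F 0)) h" by (simp only: id[of i])
  also have "\<dots> \<longleftrightarrow> integrable M (\<lambda>\<omega>. h (F 0 \<omega>))"
    by (rule integrable_distr_eq) (use rv h in auto)
  finally show "integrable M (\<lambda>\<omega>. h (F i \<omega>)) \<longleftrightarrow> integrable M (\<lambda>\<omega>. h (F 0 \<omega>))" .
qed

lemma sum_sq_expect:
  fixes F :: "nat \<Rightarrow> 'a \<Rightarrow> real"
  assumes ind: "indep_vars (\<lambda>_. borel) F UNIV"
    and rv: "\<And>i. F i \<in> borel_measurable M"
    and id: "\<And>i. distr M borel (F i) = distr M borel (F 0)"
    and sq: "integrable M (\<lambda>\<omega>. (F 0 \<omega>)\<^sup>2)"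
    and m0: "integral\<^sup>L M (F 0) = 0"
  shows "integrable M (\<lambda>\<omega>. (\<Sum>i<N. F i \<omega>)\<^sup>2)"
    and "integral\<^sup>L M (\<lambda>\<omega>. (\<Sum>i<N. F i \<omega>)\<^sup>2) = real N * integral\<^sup>L M (\<lambda>\<omega>. (F 0 \<omega>)\<^sup>2)"
proof -
  have sqi: "integrable M (\<lambda>\<omega>. (F i \<omega>)\<^sup>2)" for i
    using id_integral(2)[where F=F and h="\<lambda>x. x\<^sup>2" and i=i, OF rv id] sq by simp
  have sqe: "integral\<^sup>L M (\<lambda>\<omega>. (F i \<omega>)\<^sup>2) = integral\<^sup>L M (\<lambda>\<omega>. (F 0 \<omega>)\<^sup>2)" for i
    using id_integral(1)[where F=F and h="\<lambda>x. x\<^sup>2" and i=i, OF rv id] by simp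
  have inti: "integrable M (F i)" for i
    using square_integrable_imp_integrable[OF rv sqi] .
  have me: "integral\<^sup>L M (F i) = 0" for i
    using id_integral(1)[where F=F and h="\<lambda>x. x" and i=i, OF rv id] m0 by simp
  have pi: "integrable M (\<lambda>\<omega>. F i \<omega> * F j \<omega>)" for i j
    by (rule L2_mult_integrable[OF rv rv sqi sqi])
  have pe: "integral\<^sup>L M (\<lambda>\<omega>. F i \<omega> * F j \<omega>) = (if i = j then integral\<^sup>L M (\<lambda>\<omega>. (F 0 \<omega>)\<^sup>2) else 0)" for i j
  proof (cases "i = j")
    case True then show ?thesis using sqe[of i] by (simp add: power2_eq_square)
  next
    case False
    have "integral\<^sup>L M (\<lambda>\<omega>. F i \<omega> * F j \<omega>) = integral\<^sup>L M (F i) * integral\<^sup>L M (F j)"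
      by (rule indep_var_lebesgue_integral[OF indep_pair[OF ind False] inti inti])
    then show ?thesis using False me by simp
  qed
  have eq: "(\<lambda>\<omega>. (\<Sum>i<N. F i \<omega>)\<^sup>2) = (\<lambda>\<omega>. \<Sum>i<N. \<Sum>j<N. F i \<omega> * F j \<omega>)"
    by (simp add: power2_eq_square sum_product)
  show "integrable M (\<lambda>\<omega>. (\<Sum>i<N. F i \<omega>)\<^sup>2)"
    unfolding eq by (intro Bochner_Integration.integrable_sum pi)
  have "integral\<^sup>L M (\<lambda>\<omega>. \<Sum>i<N. \<Sum>j<N. F i \<omega> * F j \<omega>) = (\<Sum>i<N. \<Sum>j<N. integral\<^sup>L M (\<lambda>\<omega>. F i \<omega> * F j \<omega>))"
    by (simp add: Bochner_Integration.integral_sum pi Bochner_Integration.integrable_sum)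
  also have "\<dots> = (\<Sum>i<N. integral\<^sup>L M (\<lambda>\<omega>. (F 0 \<omega>)\<^sup>2))"
    by (simp add: pe)
  finally show "integral\<^sup>L M (\<lambda>\<omega>. (\<Sum>i<N. F i \<omega>)\<^sup>2) = real N * integral\<^sup>L M (\<lambda>\<omega>. (F 0 \<omega>)\<^sup>2)"
    unfolding eq by simp
qed

end



definition clip :: "real \<Rightarrow> real \<Rightarrow> real" where "clip c x = max (- c) (min c x)"

lemma clip_meas[measurable]: "clip c \<in> borel_measurable borel"
  unfolding clip_def by measurable

lemma clip_bound: "c \<ge> 0 \<Longrightarrow> \<bar>clip c x\<bar> \<le> c" unfolding clip_def by auto
lemma clip_diff: "c \<ge> 0 \<Longrightarrow> \<bar>x - clip c x\<bar> \<le> \<bar>x\<bar>" unfolding clip_def by auto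
lemma clip_eq: "\<bar>x\<bar> \<le> c \<Longrightarrow> clip c x = x" unfolding clip_def by auto

context prob_space begin

lemma id_compose:
  fixes F :: "nat \<Rightarrow> 'a \<Rightarrow> real"
  assumes rv: "\<And>i. F i \<in> borel_measurable M"
    and id: "\<And>i. distr M borel (F i) = distr M borel (F 0)"
    and h: "h \<in> borel_measurable borel"
  shows "distr M borel (\<lambda>\<omega>. (h::real\<Rightarrow>real) (F i \<omega>)) = distr M borel (\<lambda>\<omega>. h (F 0 \<omega>))"
proof -
  have "distr M borel (\<lambda>\<omega>. h (F i \<omega>)) = distr (distr M borel (F i)) borel h"
    using distr_distr[OF h rv[of i]] by (simp add: comp_def)
  also have "\<dots> = distr (distr M borel (F 0)) borel h" by (simp only: id[of i])
  also have "\<dots> = distr M borel (\<lambda>\<omega>. h (F 0 \<omega>))"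
    using distr_distr[OF h rv[of 0]] by (simp add: comp_def)
  finally show ?thesis .
qed

lemma bounded_in_prob:
  fixes F :: "nat \<Rightarrow> 'a \<Rightarrow> real"
  assumes ind: "indep_vars (\<lambda>_. borel) F UNIV"
    and rv: "\<And>i. F i \<in> borel_measurable M"
    and id: "\<And>i. distr M borel (F i) = distr M borel (F 0)"
    and sq: "integrable M (\<lambda>\<omega>. (F 0 \<omega>)\<^sup>2)"
    and m0: "integral\<^sup>L M (F 0) = 0"
    and d: "\<delta> > 0"
  shows "\<exists>C>0. \<forall>N. prob {\<omega>\<in>space M. C < \<bar>(1 / sqrt (real N)) * (\<Sum>i<N. F i \<omega>)\<bar>} \<le> \<delta>"
proof -
  define s where "s = integral\<^sup>L M (\<lambda>\<omega>. (F 0 \<omega>)\<^sup>2)"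
  have s0: "s \<ge> 0" unfolding s_def by (rule integral_nonneg_AE) auto
  define C where "C = sqrt (s / \<delta>) + 1"
  have sd: "0 \<le> s / \<delta>" using s0 d by (intro divide_nonneg_pos)
  have C0: "C > 0" unfolding C_def using real_sqrt_ge_zero[OF sd] by linarith
  have "sqrt (s / \<delta>) \<le> C" unfolding C_def by simp
  then have "(sqrt (s / \<delta>))\<^sup>2 \<le> C\<^sup>2" by (rule power_mono) (rule real_sqrt_ge_zero[OF sd])
  then have Cs: "s / \<delta> \<le> C\<^sup>2" using sd by simp
  have sC: "s / C\<^sup>2 \<le> \<delta>"
    using Cs C0 d by (simp add: field_simps)
  show ?thesis
  proof (intro exI[of _ C] conjI allI C0)
    fix N
    show "prob {\<omega>\<in>space M. C < \<bar>(1 / sqrt (real N)) * (\<Sum>i<N. F i \<omega>)\<bar>} \<le> \<delta>"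
    proof (cases "N = 0")
      case True then show ?thesis using d C0 by simp
    next
      case False
      have rvs[measurable]: "(\<lambda>\<omega>. \<Sum>i<N. F i \<omega>) \<in> borel_measurable M" using rv by auto
      define u where "u = (\<lambda>\<omega>. (\<Sum>i<N. F i \<omega>)\<^sup>2 / real N)"
      have ui: "integrable M u" unfolding u_def
        using sum_sq_expect(1)[OF ind rv id sq m0, of N] by auto
      have ue: "integral\<^sup>L M u = s" unfolding u_def s_def
        using sum_sq_expect(2)[OF ind rv id sq m0, of N] False by simp
      have sub: "{\<omega>\<in>space M. C < \<bar>(1 / sqrt (real N)) * (\<Sum>i<N. F i \<omega>)\<bar>} \<subseteq> {\<omega>\<in>space M. u \<omega> \<ge> C\<^sup>2}"
      proof safe
        fix \<omega> assume "\<omega> \<in> space M" "C < \<bar>(1 / sqrt (real N)) * (\<Sum>i<N. F i \<omega>)\<bar>"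
        then have "C\<^sup>2 \<le> (\<bar>(1 / sqrt (real N)) * (\<Sum>i<N. F i \<omega>)\<bar>)\<^sup>2"
          using C0 by (intro power_mono) auto
        also have "\<dots> = u \<omega>" unfolding u_def using False
          by (simp add: power_mult_distrib power_divide)
        finally show "C\<^sup>2 \<le> u \<omega>" .
      qed
      have "prob {\<omega>\<in>space M. C < \<bar>(1 / sqrt (real N)) * (\<Sum>i<N. F i \<omega>)\<bar>} \<le> prob {\<omega>\<in>space M. u \<omega> \<ge> C\<^sup>2}"
        by (rule finite_measure_mono[OF sub]) (auto simp: u_def)
      also have "\<dots> \<le> integral\<^sup>L M u / C\<^sup>2"
        by (rule integral_Markov_inequality_measure[OF ui]) (use C0 in \<open>auto simp: u_def\<close>)
      also have "\<dots> \<le> \<delta>" using ue sC by simp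
      finally show ?thesis .
    qed
  qed
qed

end



context prob_space begin

lemma trunc_small:
  fixes f :: "'a \<Rightarrow> real"
  assumes [measurable]: "f \<in> borel_measurable M" and int: "integrable M f" and e: "e > 0"
  shows "\<exists>c>0. integral\<^sup>L M (\<lambda>\<omega>. \<bar>f \<omega> - clip c (f \<omega>)\<bar>) < e"
proof -
  define s where "s = (\<lambda>n::nat. \<lambda>\<omega>. \<bar>f \<omega> - clip (real n) (f \<omega>)\<bar>)"
  have lim: "(\<lambda>n. integral\<^sup>L M (s n)) \<longlonglongrightarrow> integral\<^sup>L M (\<lambda>\<omega>. 0::real)"
  proof (rule integral_dominated_convergence[where w="\<lambda>\<omega>. \<bar>f \<omega>\<bar>"])
    show "(\<lambda>\<omega>. 0::real) \<in> borel_measurable M" by simp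
    show "s n \<in> borel_measurable M" for n unfolding s_def by measurable
    show "integrable M (\<lambda>\<omega>. \<bar>f \<omega>\<bar>)" using int by auto
    show "AE \<omega> in M. (\<lambda>n. s n \<omega>) \<longlonglongrightarrow> 0"
    proof (rule AE_I2)
      fix \<omega>
      have "eventually (\<lambda>n. s n \<omega> = 0) sequentially"
      proof -
        obtain n0 :: nat where "\<bar>f \<omega>\<bar> \<le> real n0" using real_arch_simple by blast
        then show ?thesis unfolding s_def eventually_sequentially
          by (intro exI[of _ n0] allI impI) (simp add: clip_eq)
      qed
      then show "(\<lambda>n. s n \<omega>) \<longlonglongrightarrow> 0" by (rule tendsto_eventually)
    qed
    show "AE \<omega> in M. norm (s n \<omega>) \<le> \<bar>f \<omega>\<bar>" for n
      unfolding s_def by (intro AE_I2) (simp add: clip_diff)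
  qed
  then have "eventually (\<lambda>n. integral\<^sup>L M (s n) < e) sequentially"
    using e by (intro order_tendstoD) auto
  then obtain n where n: "n \<ge> 1" "integral\<^sup>L M (s n) < e"
    unfolding eventually_sequentially by (metis le_add2 nle_le)
  then show ?thesis unfolding s_def by (intro exI[of _ "real n"]) auto
qed

lemma wlln:
  fixes F :: "nat \<Rightarrow> 'a \<Rightarrow> real"
  assumes ind: "indep_vars (\<lambda>_. borel) F UNIV"
    and rv[measurable]: "\<And>i. F i \<in> borel_measurable M"
    and id: "\<And>i. distr M borel (F i) = distr M borel (F 0)"
    and int0: "integrable M (F 0)"
    and eta: "\<eta> > 0" and d: "\<delta> > 0"
  shows "\<exists>N0. \<forall>N\<ge>N0. prob {\<omega>\<in>space M. \<eta> < \<bar>(\<Sum>i<N. F i \<omega>) / real N - expectation (F 0)\<bar>} \<le> \<delta>"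
proof -
  define m where "m = expectation (F 0)"
  define e0 where "e0 = \<eta> * min 1 \<delta> / 12"
  have e0: "e0 > 0" unfolding e0_def using eta d by simp
  obtain c where c: "c > 0" "integral\<^sup>L M (\<lambda>\<omega>. \<bar>F 0 \<omega> - clip c (F 0 \<omega>)\<bar>) < e0"
    using trunc_small[OF rv int0 e0] by blast
  have intF: "integrable M (F i)" for i
    using id_integral(2)[where F=F and h="\<lambda>x. x" and i=i, OF rv id] int0 by simp
  have intG: "integrable M (\<lambda>\<omega>. clip c (F i \<omega>))" for i
    by (rule integrable_const_bound[where B=c]) (use c in \<open>auto intro!: AE_I2 simp: clip_bound\<close>)
  have intD: "integrable M (\<lambda>\<omega>. \<bar>F i \<omega> - clip c (F i \<omega>)\<bar>)" for i
    using intF intG by auto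
  define mG where "mG = expectation (\<lambda>\<omega>. clip c (F 0 \<omega>))"
  have mGi: "expectation (\<lambda>\<omega>. clip c (F i \<omega>)) = mG" for i
    unfolding mG_def by (rule id_integral(1)[where F=F and h="clip c", OF rv id]) simp
  have EDi: "expectation (\<lambda>\<omega>. \<bar>F i \<omega> - clip c (F i \<omega>)\<bar>) = expectation (\<lambda>\<omega>. \<bar>F 0 \<omega> - clip c (F 0 \<omega>)\<bar>)" for i
    by (rule id_integral(1)[where F=F and h="\<lambda>x. \<bar>x - clip c x\<bar>", OF rv id]) simp
  have mGm: "\<bar>mG - m\<bar> \<le> e0"
  proof -
    have "mG - m = expectation (\<lambda>\<omega>. clip c (F 0 \<omega>) - F 0 \<omega>)"
      unfolding mG_def m_def using intG intF by simp
    also have "\<bar>\<dots>\<bar> \<le> expectation (\<lambda>\<omega>. \<bar>clip c (F 0 \<omega>) - F 0 \<omega>\<bar>)"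
      by (rule integral_abs_bound[THEN order_trans]) simp
    also have "\<dots> = expectation (\<lambda>\<omega>. \<bar>F 0 \<omega> - clip c (F 0 \<omega>)\<bar>)"
      by (simp add: abs_minus_commute)
    finally show ?thesis using c by simp
  qed
  define H where "H = (\<lambda>i \<omega>. clip c (F i \<omega>) - mG)"
  have Hrv: "H i \<in> borel_measurable M" for i unfolding H_def by measurable
  have Hind: "indep_vars (\<lambda>_. borel) H UNIV"
    unfolding H_def by (rule indep_vars_compose2[OF ind, where Y="\<lambda>i x. clip c x - mG"]) simp
  have Hid: "distr M borel (H i) = distr M borel (H 0)" for i
    unfolding H_def by (rule id_compose[where F=F and h="\<lambda>x. clip c x - mG", OF rv id]) simp
  have Hsq: "integrable M (\<lambda>\<omega>. (H 0 \<omega>)\<^sup>2)"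
  proof (rule integrable_const_bound[where B="(c + \<bar>mG\<bar>)\<^sup>2"])
    show "AE x in M. norm ((H 0 x)\<^sup>2) \<le> (c + \<bar>mG\<bar>)\<^sup>2"
    proof (rule AE_I2)
      fix x
      have "\<bar>H 0 x\<bar> \<le> c + \<bar>mG\<bar>" unfolding H_def using clip_bound[of c "F 0 x"] c by linarith
      then have "\<bar>H 0 x\<bar>\<^sup>2 \<le> (c + \<bar>mG\<bar>)\<^sup>2" by (rule power_mono) simp
      then show "norm ((H 0 x)\<^sup>2) \<le> (c + \<bar>mG\<bar>)\<^sup>2" by simp
    qed
  qed (use Hrv in auto)
  have Hm0: "integral\<^sup>L M (H 0) = 0"
    unfolding H_def using intG mGi[of 0] by (simp add: prob_space)
  define sH where "sH = expectation (\<lambda>\<omega>. (H 0 \<omega>)\<^sup>2)"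
  have sH0: "sH \<ge> 0" unfolding sH_def by (rule integral_nonneg_AE) auto
  define N0 where "N0 = nat \<lceil>18 * sH / (\<eta>\<^sup>2 * \<delta>)\<rceil> + 1"
  show ?thesis
  proof (intro exI[of _ N0] allI impI)
    fix N assume NN0: "N \<ge> N0"
    then have Npos: "N > 0" unfolding N0_def by simp
    have NsH: "18 * sH / (\<eta>\<^sup>2 * \<delta>) \<le> real N"
      using NN0 unfolding N0_def by linarith
    define A1 where "A1 = {\<omega>\<in>space M. (\<eta>/3)\<^sup>2 \<le> (\<Sum>i<N. H i \<omega>)\<^sup>2 / (real N)\<^sup>2}"
    define A2 where "A2 = {\<omega>\<in>space M. \<eta>/3 \<le> (\<Sum>i<N. \<bar>F i \<omega> - clip c (F i \<omega>)\<bar>) / real N}"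
    have A1m: "A1 \<in> sets M" unfolding A1_def H_def by measurable
    have A2m: "A2 \<in> sets M" unfolding A2_def by measurable
    have sub: "{\<omega>\<in>space M. \<eta> < \<bar>(\<Sum>i<N. F i \<omega>) / real N - m\<bar>} \<subseteq> A1 \<union> A2"
    proof safe
      fix \<omega> assume om: "\<omega> \<in> space M" and big: "\<eta> < \<bar>(\<Sum>i<N. F i \<omega>) / real N - m\<bar>" and n2: "\<omega> \<notin> A2"
      have h2: "(\<Sum>i<N. \<bar>F i \<omega> - clip c (F i \<omega>)\<bar>) / real N < \<eta>/3" using n2 om unfolding A2_def by auto
      have "\<bar>(\<Sum>i<N. F i \<omega> - clip c (F i \<omega>))\<bar> \<le> (\<Sum>i<N. \<bar>F i \<omega> - clip c (F i \<omega>)\<bar>)"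
        by (rule sum_abs)
      then have "\<bar>(\<Sum>i<N. F i \<omega> - clip c (F i \<omega>))\<bar> / real N \<le> (\<Sum>i<N. \<bar>F i \<omega> - clip c (F i \<omega>)\<bar>) / real N"
        by (rule divide_right_mono) simp
      moreover have "\<bar>(\<Sum>i<N. F i \<omega> - clip c (F i \<omega>)) / real N\<bar> = \<bar>(\<Sum>i<N. F i \<omega> - clip c (F i \<omega>))\<bar> / real N"
        by (simp add: abs_divide)
      ultimately have h2': "\<bar>(\<Sum>i<N. F i \<omega> - clip c (F i \<omega>)) / real N\<bar> < \<eta>/3"
        using h2 by linarith
      have decomp: "(\<Sum>i<N. F i \<omega>) / real N - m
           = (\<Sum>i<N. H i \<omega>) / real N + (\<Sum>i<N. F i \<omega> - clip c (F i \<omega>)) / real N + (mG - m)"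
        unfolding H_def using Npos by (simp add: sum_subtractf field_simps)
      have e012: "e0 \<le> \<eta>/12" unfolding e0_def using eta d
        by (simp add: mult_left_le)
      have tri: "\<bar>(\<Sum>i<N. F i \<omega>) / real N - m\<bar> \<le> \<bar>(\<Sum>i<N. H i \<omega>) / real N\<bar>
            + \<bar>(\<Sum>i<N. F i \<omega> - clip c (F i \<omega>)) / real N\<bar> + \<bar>mG - m\<bar>"
        unfolding decomp
        using abs_triangle_ineq[of "(\<Sum>i<N. H i \<omega>) / real N + (\<Sum>i<N. F i \<omega> - clip c (F i \<omega>)) / real N" "mG - m"]
              abs_triangle_ineq[of "(\<Sum>i<N. H i \<omega>) / real N" "(\<Sum>i<N. F i \<omega> - clip c (F i \<omega>)) / real N"]
        by linarith
      have "\<eta>/3 \<le> \<bar>(\<Sum>i<N. H i \<omega>) / real N\<bar>"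
        using big h2' mGm e012 tri by linarith
      then have "(\<eta>/3)\<^sup>2 \<le> (\<bar>(\<Sum>i<N. H i \<omega>) / real N\<bar>)\<^sup>2"
        using eta by (intro power_mono) auto
      then show "\<omega> \<in> A1" unfolding A1_def using om by (simp add: power_divide)
    qed
    have p1: "prob A1 \<le> \<delta>/2"
    proof -
      have ui: "integrable M (\<lambda>\<omega>. (\<Sum>i<N. H i \<omega>)\<^sup>2 / (real N)\<^sup>2)"
        using sum_sq_expect(1)[OF Hind Hrv Hid Hsq Hm0, of N] by simp
      have "prob A1 \<le> expectation (\<lambda>\<omega>. (\<Sum>i<N. H i \<omega>)\<^sup>2 / (real N)\<^sup>2) / (\<eta>/3)\<^sup>2"
        unfolding A1_def
        by (rule integral_Markov_inequality_measure[OF ui]) (use eta Hrv in auto)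
      also have "\<dots> = real N * sH / (real N)\<^sup>2 / (\<eta>/3)\<^sup>2"
        using sum_sq_expect(2)[OF Hind Hrv Hid Hsq Hm0, of N] unfolding sH_def by simp
      also have "\<dots> = 9 * sH / (real N * \<eta>\<^sup>2)"
        using Npos eta by (simp add: field_simps power2_eq_square)
      also have "\<dots> \<le> \<delta>/2"
      proof -
        have "18 * sH \<le> real N * (\<eta>\<^sup>2 * \<delta>)"
          using NsH eta d by (simp add: field_simps)
        then show ?thesis using Npos eta d by (simp add: field_simps)
      qed
      finally show ?thesis .
    qed
    have p2: "prob A2 \<le> \<delta>/4"
    proof -
      have ui: "integrable M (\<lambda>\<omega>. (\<Sum>i<N. \<bar>F i \<omega> - clip c (F i \<omega>)\<bar>) / real N)"
        using intD by auto
      have "prob A2 \<le> expectation (\<lambda>\<omega>. (\<Sum>i<N. \<bar>F i \<omega> - clip c (F i \<omega>)\<bar>) / real N) / (\<eta>/3)"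
        unfolding A2_def
        by (rule integral_Markov_inequality_measure[OF ui]) (use eta in auto)
      also have "expectation (\<lambda>\<omega>. (\<Sum>i<N. \<bar>F i \<omega> - clip c (F i \<omega>)\<bar>) / real N)
               = expectation (\<lambda>\<omega>. \<bar>F 0 \<omega> - clip c (F 0 \<omega>)\<bar>)"
      proof -
        have "expectation (\<lambda>\<omega>. (\<Sum>i<N. \<bar>F i \<omega> - clip c (F i \<omega>)\<bar>) / real N)
            = (\<Sum>i<N. expectation (\<lambda>\<omega>. \<bar>F i \<omega> - clip c (F i \<omega>)\<bar>)) / real N"
          using intD by (simp add: Bochner_Integration.integral_sum)
        also have "\<dots> = (\<Sum>i<N. expectation (\<lambda>\<omega>. \<bar>F 0 \<omega> - clip c (F 0 \<omega>)\<bar>)) / real N"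
          by (rule arg_cong[where f="\<lambda>x. x / real N"], rule sum.cong[OF refl], rule EDi)
        also have "\<dots> = expectation (\<lambda>\<omega>. \<bar>F 0 \<omega> - clip c (F 0 \<omega>)\<bar>)"
          using Npos by simp
        finally show ?thesis .
      qed
      also have "\<dots> / (\<eta>/3) \<le> e0 / (\<eta>/3)"
        using c eta by (intro divide_right_mono) auto
      also have "\<dots> \<le> \<delta>/4"
        unfolding e0_def using eta d by (simp add: field_simps)
      finally show ?thesis .
    qed
    have "prob {\<omega>\<in>space M. \<eta> < \<bar>(\<Sum>i<N. F i \<omega>) / real N - m\<bar>} \<le> prob (A1 \<union> A2)"
      by (rule finite_measure_mono[OF sub]) (use A1m A2m in auto)
    also have "\<dots> \<le> prob A1 + prob A2" by (rule measure_Un_le[OF A1m A2m])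
    also have "\<dots> \<le> \<delta>" using p1 p2 d by simp
    finally show "prob {\<omega>\<in>space M. \<eta> < \<bar>(\<Sum>i<N. F i \<omega>) / real N - expectation (F 0)\<bar>} \<le> \<delta>"
      unfolding m_def .
  qed
qed

end



definition L2 :: "'a measure \<Rightarrow> ('a \<Rightarrow> real) \<Rightarrow> bool" where
  "L2 M f \<longleftrightarrow> f \<in> borel_measurable M \<and> integrable M (\<lambda>x. (f x)\<^sup>2)"

lemma L2_mult: "L2 M f \<Longrightarrow> L2 M g \<Longrightarrow> integrable M (\<lambda>x. f x * g x)"
  unfolding L2_def using L2_mult_integrable by blast

lemma L2_add: assumes "L2 M f" "L2 M g" shows "L2 M (\<lambda>x. f x + g x)"
proof -
  have i: "integrable M (\<lambda>x. f x * g x)" using L2_mult[OF assms] .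
  have "(\<lambda>x. (f x + g x)\<^sup>2) = (\<lambda>x. (f x)\<^sup>2 + 2 * (f x * g x) + (g x)\<^sup>2)"
    by (simp add: power2_eq_square algebra_simps)
  then show ?thesis using assms i unfolding L2_def by auto
qed

lemma L2_scale: assumes "L2 M f" shows "L2 M (\<lambda>x. a * f x)"
proof -
  have "(\<lambda>x. (a * f x)\<^sup>2) = (\<lambda>x. a\<^sup>2 * (f x)\<^sup>2)" by (simp add: power_mult_distrib)
  then show ?thesis using assms unfolding L2_def by auto
qed

lemma L2_zero: "L2 M (\<lambda>x. 0)" unfolding L2_def by simp

lemma L2_sum: "finite J \<Longrightarrow> (\<And>j. j \<in> J \<Longrightarrow> L2 M (f j)) \<Longrightarrow> L2 M (\<lambda>x. \<Sum>j\<in>J. f j x)"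
proof (induction J rule: finite_induct)
  case empty then show ?case by (simp add: L2_zero)
next
  case (insert a J)
  then show ?case by (simp add: L2_add)
qed

lemma L2_diff: assumes "L2 M f" "L2 M g" shows "L2 M (\<lambda>x. f x - g x)"
  using L2_add[OF assms(1) L2_scale[OF assms(2), of "-1"]] by simp

lemma L2_div: assumes "L2 M f" shows "L2 M (\<lambda>x. f x / a)"
  using L2_scale[OF assms, of "1/a"] by simp

lemma lin_comb_integral:
  assumes "finite J" "\<And>k. k \<in> J \<Longrightarrow> L2 M (Z k)" "L2 M g"
  shows "integral\<^sup>L M (\<lambda>x. (\<Sum>k\<in>J. a k * Z k x) * g x) = (\<Sum>k\<in>J. a k * integral\<^sup>L M (\<lambda>x. Z k x * g x))"
proof -
  have "(\<lambda>x. (\<Sum>k\<in>J. a k * Z k x) * g x) = (\<lambda>x. \<Sum>k\<in>J. a k * (Z k x * g x))"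
    by (simp add: sum_distrib_right mult.assoc)
  moreover have "integrable M (\<lambda>x. Z k x * g x)" if "k \<in> J" for k
    using L2_mult[OF assms(2)[OF that] assms(3)] .
  ultimately show ?thesis by (simp add: Bochner_Integration.integral_sum)
qed

context prob_space begin

definition Zc :: "(nat \<Rightarrow> 'a \<Rightarrow> real) \<Rightarrow> (nat \<Rightarrow> nat \<Rightarrow> real) \<Rightarrow> nat \<Rightarrow> nat \<Rightarrow> 'a \<Rightarrow> real" where
  "Zc Fb t m k x = (\<Sum>j<m. t k j * Fb j x)"

lemma gram_schmidt:
  fixes Fb :: "nat \<Rightarrow> 'a \<Rightarrow> real"
  assumes L: "\<And>j. L2 M (Fb j)"
  shows "\<exists>r t c. (\<forall>k<r. \<forall>l<r. expectation (\<lambda>x. Zc Fb t m k x * Zc Fb t m l x) = (if k = l then 1 else 0))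
     \<and> (\<forall>j<m. AE x in M. Fb j x = (\<Sum>k<r. c j k * Zc Fb t m k x))
     \<and> (\<forall>k j. j \<ge> m \<longrightarrow> t k j = 0)
     \<and> (m > 0 \<longrightarrow> expectation (\<lambda>x. (Fb 0 x)\<^sup>2) = 1 \<longrightarrow> r > 0 \<and> (\<forall>j. t 0 j = (if j = 0 then 1 else 0)))"
proof (induction m)
  case 0
  show ?case by (rule exI[of _ 0], rule exI[of _ "\<lambda>k j. 0"], rule exI[of _ "\<lambda>j k. 0"]) simp
next
  case (Suc m)
  then obtain r t c where
    O: "\<forall>k<r. \<forall>l<r. expectation (\<lambda>x. Zc Fb t m k x * Zc Fb t m l x) = (if k = l then 1 else 0)"
    and R: "\<forall>j<m. AE x in M. Fb j x = (\<Sum>k<r. c j k * Zc Fb t m k x)"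
    and T: "\<forall>k j. j \<ge> m \<longrightarrow> t k j = 0"
    and I: "m > 0 \<longrightarrow> expectation (\<lambda>x. (Fb 0 x)\<^sup>2) = 1 \<longrightarrow> r > 0 \<and> (\<forall>j. t 0 j = (if j = 0 then 1 else 0))"
    by (elim exE conjE) (rule that)
  define Z where "Z = Zc Fb t m"
  have r0: "r = 0" if "m = 0"
  proof (rule ccontr)
    assume "r \<noteq> 0"
    then have "expectation (\<lambda>x. Zc Fb t m 0 x * Zc Fb t m 0 x) = 1" using O by simp
    then show False using that unfolding Zc_def by simp
  qed
  have ZL: "L2 M (Z k)" for k
    unfolding Z_def Zc_def by (intro L2_sum L2_scale L) simp
  have Zsuc: "Zc Fb t (Suc m) k = Z k" for k
    using T unfolding Z_def Zc_def by (auto simp: fun_eq_iff)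
  define a where "a k = expectation (\<lambda>x. Fb m x * Z k x)" for k
  define e where "e x = Fb m x - (\<Sum>k<r. a k * Z k x)" for x
  have eL: "L2 M e" unfolding e_def
    by (intro L2_diff L L2_sum L2_scale ZL) simp
  have eZ: "expectation (\<lambda>x. e x * Z l x) = 0" if "l < r" for l
  proof -
    have "expectation (\<lambda>x. e x * Z l x) = expectation (\<lambda>x. Fb m x * Z l x) - expectation (\<lambda>x. (\<Sum>k<r. a k * Z k x) * Z l x)"
      unfolding e_def left_diff_distrib
      by (rule Bochner_Integration.integral_diff; intro L2_mult L ZL L2_sum L2_scale) simp
    also have "expectation (\<lambda>x. (\<Sum>k<r. a k * Z k x) * Z l x) = (\<Sum>k<r. a k * expectation (\<lambda>x. Z k x * Z l x))"
      by (rule lin_comb_integral) (simp_all add: ZL)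
    also have "\<dots> = (\<Sum>k<r. a k * (if k = l then 1 else 0))"
      using O that unfolding Z_def by (intro sum.cong) auto
    also have "\<dots> = a l" using that by (simp add: if_distrib cong: if_cong)
    finally show ?thesis unfolding a_def by simp
  qed
  define s where "s = expectation (\<lambda>x. (e x)\<^sup>2)"
  have s0: "s \<ge> 0" unfolding s_def by (rule integral_nonneg_AE) simp
  show ?case
  proof (cases "s = 0")
    case True
    have "AE x in M. (e x)\<^sup>2 = 0"
      using True eL unfolding s_def L2_def
      by (subst integral_nonneg_eq_0_iff_AE[symmetric]) auto
    then have Ae: "AE x in M. Fb m x = (\<Sum>k<r. a k * Z k x)"
      by eventually_elim (simp add: e_def)
    define c' where "c' j k = (if j = m then a k else c j k)" for j k
    show ?thesis
    proof (rule exI[of _ r], rule exI[of _ t], rule exI[of _ c'], intro conjI)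
      show "\<forall>k<r. \<forall>l<r. expectation (\<lambda>x. Zc Fb t (Suc m) k x * Zc Fb t (Suc m) l x) = (if k = l then 1 else 0)"
        using O unfolding Zsuc Z_def by simp
      show "\<forall>j<Suc m. AE x in M. Fb j x = (\<Sum>k<r. c' j k * Zc Fb t (Suc m) k x)"
      proof (intro allI impI)
        fix j assume "j < Suc m"
        then consider "j < m" | "j = m" by linarith
        then show "AE x in M. Fb j x = (\<Sum>k<r. c' j k * Zc Fb t (Suc m) k x)"
        proof cases
          case 1 then show ?thesis using R unfolding Zsuc c'_def Z_def by auto
        next
          case 2 then show ?thesis using Ae unfolding Zsuc c'_def by simp
        qed
      qed
      show "\<forall>k j. j \<ge> Suc m \<longrightarrow> t k j = 0" using T by auto
      show "Suc m > 0 \<longrightarrow> expectation (\<lambda>x. (Fb 0 x)\<^sup>2) = 1 \<longrightarrow> r > 0 \<and> (\<forall>j. t 0 j = (if j = 0 then 1 else 0))"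
      proof (intro impI)
        assume E1: "expectation (\<lambda>x. (Fb 0 x)\<^sup>2) = 1"
        show "r > 0 \<and> (\<forall>j. t 0 j = (if j = 0 then 1 else 0))"
        proof (cases "m = 0")
          case False then show ?thesis using I E1 by simp
        next
          case m0: True
          have "e = Fb 0" using r0[OF m0] m0 unfolding e_def by (simp add: fun_eq_iff)
          then have "s = 1" using E1 unfolding s_def by simp
          then show ?thesis using True by simp
        qed
      qed
    qed
  next
    case False
    then have spos: "s > 0" using s0 by simp
    define q where "q = sqrt s"
    have q0: "q > 0" unfolding q_def using spos by simp
    define t' where "t' k j = (if k = r then (if j = m then 1 / q else if j < m then - (\<Sum>k'<r. a k' * t k' j) / q else 0) else t k j)" for k j
    define c' where "c' j k = (if j = m then (if k = r then q else a k) else (if k = r then 0 else c j k))" for j k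
    have Z'old: "Zc Fb t' (Suc m) k = Z k" if "k \<noteq> r" for k
      using that T unfolding Z_def Zc_def t'_def by (auto simp: fun_eq_iff)
    have Z'new: "Zc Fb t' (Suc m) r = (\<lambda>x. e x / q)"
    proof
      fix x
      define A where "A j = (\<Sum>k'<r. a k' * t k' j)" for j
      have "Zc Fb t' (Suc m) r x = (\<Sum>j<m. (- A j / q) * Fb j x) + 1 / q * Fb m x"
        unfolding Zc_def t'_def A_def by simp
      also have "(\<Sum>j<m. (- A j / q) * Fb j x) = (- 1 / q) * (\<Sum>j<m. A j * Fb j x)"
        unfolding sum_distrib_left by (rule sum.cong) simp_all
      also have "(\<Sum>j<m. A j * Fb j x) = (\<Sum>j<m. \<Sum>k<r. a k * (t k j * Fb j x))"
        unfolding A_def sum_distrib_right by (simp add: mult.assoc)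
      also have "\<dots> = (\<Sum>k<r. \<Sum>j<m. a k * (t k j * Fb j x))" by (rule sum.swap)
      also have "\<dots> = (\<Sum>k<r. a k * Z k x)"
        unfolding Z_def Zc_def sum_distrib_left by simp
      finally have "Zc Fb t' (Suc m) r x = - 1 / q * (\<Sum>k<r. a k * Z k x) + 1 / q * Fb m x" .
      then show "Zc Fb t' (Suc m) r x = e x / q" unfolding e_def diff_divide_distrib by simp
    qed
    show ?thesis
    proof (rule exI[of _ "Suc r"], rule exI[of _ t'], rule exI[of _ c'], intro conjI)
      have eZq: "expectation (\<lambda>x. e x / q * Z l x) = 0" if "l < r" for l
        using eZ[OF that] by (simp add: divide_simps)
      have eq1: "expectation (\<lambda>x. e x / q * (e x / q)) = 1"
      proof -
        have "expectation (\<lambda>x. e x / q * (e x / q)) = expectation (\<lambda>x. (e x)\<^sup>2) / q\<^sup>2"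
          by (simp add: power2_eq_square)
        then show ?thesis using q0 spos unfolding q_def s_def[symmetric] by simp
      qed
      show "\<forall>k<Suc r. \<forall>l<Suc r. expectation (\<lambda>x. Zc Fb t' (Suc m) k x * Zc Fb t' (Suc m) l x) = (if k = l then 1 else 0)"
      proof (intro allI impI)
        fix k l assume k: "k < Suc r" and l: "l < Suc r"
        show "expectation (\<lambda>x. Zc Fb t' (Suc m) k x * Zc Fb t' (Suc m) l x) = (if k = l then 1 else 0)"
        proof (cases "k = r")
          case kr: True
          show ?thesis
          proof (cases "l = r")
            case True then show ?thesis by (simp only: True kr Z'new eq1) simp
          next
            case False then have "l < r" using l by simp
            then show ?thesis using kr False Z'new Z'old[OF False] eZq by simp
          qed
        next
          case kr: False then have kr': "k < r" using k by simp
          show ?thesis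
          proof (cases "l = r")
            case True then show ?thesis using kr Z'new Z'old[OF kr] eZq[OF kr'] by (simp add: mult.commute)
          next
            case False then have "l < r" using l by simp
            then show ?thesis using kr kr' False Z'old[OF False] Z'old[OF kr] O unfolding Z_def by simp
          qed
        qed
      qed
      show "\<forall>j<Suc m. AE x in M. Fb j x = (\<Sum>k<Suc r. c' j k * Zc Fb t' (Suc m) k x)"
      proof (intro allI impI)
        fix j assume "j < Suc m"
        have split: "(\<Sum>k<Suc r. c' j k * Zc Fb t' (Suc m) k x) = (\<Sum>k<r. c' j k * Z k x) + c' j r * (e x / q)" for x
          using Z'old Z'new by simp
        from \<open>j < Suc m\<close> consider "j < m" | "j = m" by linarith
        then show "AE x in M. Fb j x = (\<Sum>k<Suc r. c' j k * Zc Fb t' (Suc m) k x)"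
        proof cases
          case 1
          then have "AE x in M. Fb j x = (\<Sum>k<r. c j k * Z k x)" using R unfolding Z_def by auto
          then show ?thesis unfolding split
          proof (rule AE_mp[OF _ AE_I2], intro impI)
            fix x assume "Fb j x = (\<Sum>k<r. c j k * Z k x)"
            moreover have "(\<Sum>k<r. c' j k * Z k x) = (\<Sum>k<r. c j k * Z k x)"
              using 1 unfolding c'_def by (intro sum.cong) auto
            ultimately show "Fb j x = (\<Sum>k<r. c' j k * Z k x) + c' j r * (e x / q)"
              using 1 unfolding c'_def by simp
          qed
        next
          case 2
          show ?thesis unfolding split
          proof (rule AE_I2)
            fix x
            have "(\<Sum>k<r. c' j k * Z k x) = (\<Sum>k<r. a k * Z k x)"
              using 2 unfolding c'_def by (intro sum.cong) auto
            then show "Fb j x = (\<Sum>k<r. c' j k * Z k x) + c' j r * (e x / q)"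
              using 2 q0 unfolding c'_def e_def by simp
          qed
        qed
      qed
      show "\<forall>k j. j \<ge> Suc m \<longrightarrow> t' k j = 0" using T unfolding t'_def by auto
      show "Suc m > 0 \<longrightarrow> expectation (\<lambda>x. (Fb 0 x)\<^sup>2) = 1 \<longrightarrow> Suc r > 0 \<and> (\<forall>j. t' 0 j = (if j = 0 then 1 else 0))"
      proof (intro impI conjI)
        assume E1: "expectation (\<lambda>x. (Fb 0 x)\<^sup>2) = 1"
        show "\<forall>j. t' 0 j = (if j = 0 then 1 else 0)"
        proof (cases "m = 0")
          case False
          then have "r > 0" "\<forall>j. t 0 j = (if j = 0 then 1 else 0)" using I E1 by auto
          then show ?thesis unfolding t'_def by auto
        next
          case m0: True
          have "e = Fb 0" using r0[OF m0] m0 unfolding e_def by (simp add: fun_eq_iff)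
          then have "s = 1" using E1 unfolding s_def by simp
          then have "q = 1" unfolding q_def by simp
          then show ?thesis using r0[OF m0] m0 unfolding t'_def by auto
        qed
      qed simp
    qed
  qed
qed

end



lemma sum_split0: fixes r :: nat assumes "r > 0" shows "(\<Sum>k<r. f k) = f 0 + (\<Sum>k\<in>{1..<r}. f k)"
proof -
  show ?thesis using sum.atLeast_Suc_lessThan[OF assms, of f] by (simp add: atLeast0LessThan)
qed

lemma det_bound:
  fixes w U :: "nat \<Rightarrow> real" and Z :: "nat \<Rightarrow> nat \<Rightarrow> real" and \<phi> :: "nat \<Rightarrow> real"
  assumes N: "N > 0" and r: "r > 0" and \<rho>: "\<rho> > 0" and \<eta>: "\<eta> \<ge> 0" "\<eta> * real r \<le> \<rho> / 2" and C: "C \<ge> 0"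
    and Z0: "\<And>i. i < N \<Longrightarrow> Z i 0 = 1"
    and NE: "\<And>k. k < r \<Longrightarrow> (\<Sum>i<N. w i * (U i - (\<Sum>l<r. Z i l * \<phi> l)) * Z i k) = 0"
    and hM: "\<And>k l. k < r \<Longrightarrow> l < r \<Longrightarrow> \<bar>(\<Sum>i<N. w i * Z i k * Z i l) / real N - (if k = l then \<rho> else 0)\<bar> \<le> \<eta>"
    and hc: "\<And>k. k < r \<Longrightarrow> \<bar>(\<Sum>i<N. w i * U i * Z i k) / real N\<bar> \<le> \<eta>"
    and hA: "\<bar>(1 / sqrt (real N)) * (\<Sum>i<N. w i * U i)\<bar> \<le> C"
    and hD: "\<And>k. k \<in> {1..<r} \<Longrightarrow> \<bar>(1 / sqrt (real N)) * (\<Sum>i<N. Z i k)\<bar> \<le> C"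
    and hB: "\<And>k. k \<in> {1..<r} \<Longrightarrow> \<bar>(1 / sqrt (real N)) * (\<Sum>i<N. w i * Z i k)\<bar> \<le> C"
  shows "\<bar>(\<Sum>k<r. \<phi> k * ((1 / sqrt (real N)) * (\<Sum>i<N. Z i k))) - (1 / sqrt (real N)) * (\<Sum>i<N. w i * U i) / \<rho>\<bar>
          \<le> 2 * C * \<eta> / \<rho>\<^sup>2 + (2 * real r * \<eta> / \<rho>) * (C + 2 * C / \<rho>)"
proof -
  define Zp where "Zp i = (\<Sum>l<r. Z i l * \<phi> l)" for i
  define Mh where "Mh k l = (\<Sum>i<N. w i * Z i k * Z i l) / real N" for k l
  define ch where "ch k = (\<Sum>i<N. w i * U i * Z i k) / real N" for k
  define s1 where "s1 = (\<Sum>k<r. \<bar>\<phi> k\<bar>)"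
  define s2 where "s2 = (\<Sum>k<r. (\<phi> k)\<^sup>2)"
  have s1ge: "s1 \<ge> 0" unfolding s1_def by (simp add: sum_nonneg)
  have q1: "(\<Sum>i<N. w i * (U i - Zp i) * Zp i) = 0"
  proof -
    have gen: "X * Zp i = (\<Sum>k<r. \<phi> k * (X * Z i k))" for X i
      unfolding Zp_def sum_distrib_left by (simp add: mult_ac)
    have "(\<Sum>i<N. w i * (U i - Zp i) * Zp i) = (\<Sum>i<N. \<Sum>k<r. \<phi> k * (w i * (U i - Zp i) * Z i k))"
      by (rule sum.cong[OF refl], rule gen)
    also have "\<dots> = (\<Sum>k<r. \<phi> k * (\<Sum>i<N. w i * (U i - Zp i) * Z i k))"
      by (subst sum.swap) (simp add: sum_distrib_left)
    also have "\<dots> = 0" using NE unfolding Zp_def by simp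
    finally show ?thesis .
  qed
  have LHS: "(\<Sum>i<N. w i * (Zp i)\<^sup>2) / real N = (\<Sum>k<r. \<Sum>l<r. \<phi> k * \<phi> l * Mh k l)"
  proof -
    have gen: "w i * (Zp i)\<^sup>2 = (\<Sum>k<r. \<Sum>l<r. \<phi> k * \<phi> l * (w i * Z i k * Z i l))" for i
    proof -
      have "(Zp i)\<^sup>2 = (\<Sum>k<r. \<Sum>l<r. (Z i k * \<phi> k) * (Z i l * \<phi> l))"
        unfolding Zp_def power2_eq_square by (rule sum_product)
      then show ?thesis by (simp add: sum_distrib_left mult_ac)
    qed
    have "(\<Sum>i<N. w i * (Zp i)\<^sup>2) = (\<Sum>i<N. \<Sum>k<r. \<Sum>l<r. \<phi> k * \<phi> l * (w i * Z i k * Z i l))"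
      by (rule sum.cong[OF refl], rule gen)
    also have "\<dots> = (\<Sum>k<r. \<Sum>i<N. \<Sum>l<r. \<phi> k * \<phi> l * (w i * Z i k * Z i l))" by (rule sum.swap)
    also have "\<dots> = (\<Sum>k<r. \<Sum>l<r. \<Sum>i<N. \<phi> k * \<phi> l * (w i * Z i k * Z i l))"
      by (rule sum.cong[OF refl], rule sum.swap)
    finally show ?thesis unfolding Mh_def
      by (simp add: sum_divide_distrib sum_distrib_left)
  qed
  have RHS: "(\<Sum>i<N. w i * U i * Zp i) / real N = (\<Sum>k<r. \<phi> k * ch k)"
  proof -
    have "(\<Sum>i<N. w i * U i * Zp i) = (\<Sum>i<N. \<Sum>k<r. \<phi> k * (w i * U i * Z i k))"
      unfolding Zp_def sum_distrib_left by (simp add: mult_ac)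
    also have "\<dots> = (\<Sum>k<r. \<Sum>i<N. \<phi> k * (w i * U i * Z i k))" by (rule sum.swap)
    finally show ?thesis unfolding ch_def by (simp add: sum_divide_distrib sum_distrib_left)
  qed
  have eqq: "(\<Sum>k<r. \<Sum>l<r. \<phi> k * \<phi> l * Mh k l) = (\<Sum>k<r. \<phi> k * ch k)"
  proof -
    have "(\<Sum>i<N. w i * (Zp i)\<^sup>2) = (\<Sum>i<N. w i * U i * Zp i)"
      using q1 by (simp add: algebra_simps power2_eq_square sum_subtractf)
    then show ?thesis using LHS RHS by simp
  qed
  have low: "(\<Sum>k<r. \<Sum>l<r. \<phi> k * \<phi> l * Mh k l) \<ge> \<rho> * s2 - \<eta> * s1\<^sup>2"
  proof -
    have diag: "(\<Sum>k<r. \<Sum>l<r. \<phi> k * \<phi> l * (if k = l then \<rho> else 0)) = \<rho> * s2"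
      unfolding s2_def by (simp add: sum_distrib_left power2_eq_square mult_ac if_distrib sum.delta cong: if_cong)
    have err: "\<bar>\<Sum>k<r. \<Sum>l<r. \<phi> k * \<phi> l * (Mh k l - (if k = l then \<rho> else 0))\<bar> \<le> \<eta> * s1\<^sup>2"
    proof -
      have "\<bar>\<Sum>k<r. \<Sum>l<r. \<phi> k * \<phi> l * (Mh k l - (if k = l then \<rho> else 0))\<bar>
          \<le> (\<Sum>k<r. \<Sum>l<r. \<bar>\<phi> k * \<phi> l * (Mh k l - (if k = l then \<rho> else 0))\<bar>)"
        by (rule order_trans[OF sum_abs]) (intro sum_mono sum_abs)
      also have "\<dots> \<le> (\<Sum>k<r. \<Sum>l<r. \<bar>\<phi> k\<bar> * \<bar>\<phi> l\<bar> * \<eta>)"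
      proof (intro sum_mono)
        fix k l assume "k \<in> {..<r}" "l \<in> {..<r}"
        then have "\<bar>Mh k l - (if k = l then \<rho> else 0)\<bar> \<le> \<eta>" using hM unfolding Mh_def by simp
        then show "\<bar>\<phi> k * \<phi> l * (Mh k l - (if k = l then \<rho> else 0))\<bar> \<le> \<bar>\<phi> k\<bar> * \<bar>\<phi> l\<bar> * \<eta>"
          unfolding abs_mult by (intro mult_left_mono) auto
      qed
      also have "\<dots> = \<eta> * s1\<^sup>2"
        unfolding s1_def power2_eq_square sum_product by (simp add: sum_distrib_left mult_ac)
      finally show ?thesis .
    qed
    have "(\<Sum>k<r. \<Sum>l<r. \<phi> k * \<phi> l * Mh k l) = \<rho> * s2 + (\<Sum>k<r. \<Sum>l<r. \<phi> k * \<phi> l * (Mh k l - (if k = l then \<rho> else 0)))"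
      unfolding diag[symmetric] by (simp add: sum.distrib[symmetric] algebra_simps)
    then show ?thesis using err by linarith
  qed
  have up: "(\<Sum>k<r. \<phi> k * ch k) \<le> \<eta> * s1"
  proof -
    have "(\<Sum>k<r. \<phi> k * ch k) \<le> (\<Sum>k<r. \<bar>\<phi> k\<bar> * \<eta>)"
    proof (intro sum_mono)
      fix k assume "k \<in> {..<r}"
      then have "\<bar>ch k\<bar> \<le> \<eta>" using hc unfolding ch_def by simp
      then have "\<bar>\<phi> k * ch k\<bar> \<le> \<bar>\<phi> k\<bar> * \<eta>" unfolding abs_mult by (intro mult_left_mono) auto
      then show "\<phi> k * ch k \<le> \<bar>\<phi> k\<bar> * \<eta>" by linarith
    qed
    then show ?thesis unfolding s1_def sum_distrib_left by (simp add: mult.commute)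
  qed
  have cs: "s1\<^sup>2 \<le> s2 * real r"
    using sum_squared_le_sum_of_squares[of "\<lambda>k. \<bar>\<phi> k\<bar>" "{..<r}"] unfolding s1_def s2_def by simp
  have s1b: "s1 \<le> 2 * real r * \<eta> / \<rho>"
  proof -
    have key: "\<rho> * s2 - \<eta> * s1\<^sup>2 \<le> \<eta> * s1" using low up eqq by linarith
    have rr: "real r > 0" using r by simp
    have "\<rho> * s1\<^sup>2 \<le> \<rho> * (s2 * real r)" using cs \<rho> by (intro mult_left_mono) auto
    then have "\<rho> * s1\<^sup>2 / real r \<le> \<rho> * s2" using rr by (simp add: field_simps)
    then have "(\<rho> / real r - \<eta>) * s1\<^sup>2 \<le> \<eta> * s1" using key by (simp add: algebra_simps)
    moreover have "\<rho> / real r - \<eta> \<ge> \<rho> / (2 * real r)"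
      using \<eta>(2) rr by (simp add: field_simps)
    ultimately have "\<rho> / (2 * real r) * s1\<^sup>2 \<le> \<eta> * s1"
      using mult_right_mono[of "\<rho> / (2 * real r)" "\<rho> / real r - \<eta>" "s1\<^sup>2"] by simp
    then have "s1 * (\<rho> / (2 * real r) * s1 - \<eta>) \<le> 0" by (simp add: power2_eq_square algebra_simps)
    then have "s1 = 0 \<or> \<rho> / (2 * real r) * s1 \<le> \<eta>"
      using s1ge by (auto simp: mult_le_0_iff)
    then show ?thesis
    proof
      assume "s1 = 0" then show ?thesis using rr \<rho> \<eta> by simp
    next
      assume "\<rho> / (2 * real r) * s1 \<le> \<eta>"
      then have "\<rho> * s1 \<le> 2 * real r * \<eta>" using rr by (simp add: field_simps)
      then show ?thesis using \<rho> by (simp add: field_simps)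
    qed
  qed
  define sN where "sN = sqrt (real N)"
  have sN: "sN > 0" unfolding sN_def using N by simp
  have sNsq: "sN * sN = real N" unfolding sN_def by simp
  define P where "P = (\<Sum>i<N. w i)"
  define p where "p = P / real N"
  have hp: "\<bar>p - \<rho>\<bar> \<le> \<eta>" using hM[OF r r] Z0 unfolding p_def P_def by simp
  have pge: "p \<ge> \<rho> / 2"
  proof -
    have "\<eta> \<le> \<eta> * real r" using \<eta> r by (simp add: mult_le_cancel_left1)
    then show ?thesis using hp \<eta> by linarith
  qed
  have ppos: "p > 0" using pge \<rho> by linarith
  define AA where "AA = (1 / sqrt (real N)) * (\<Sum>i<N. w i * U i)"
  define B where "B k = (1 / sqrt (real N)) * (\<Sum>i<N. w i * Z i k)" for k
  define Dk where "Dk k = (1 / sqrt (real N)) * (\<Sum>i<N. Z i k)" for k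
  have NE0: "(\<Sum>i<N. w i * U i) = (\<Sum>i<N. w i * Zp i)"
  proof -
    have "(\<Sum>i<N. w i * (U i - Zp i) * Z i 0) = 0" using NE[OF r] unfolding Zp_def .
    then have "(\<Sum>i<N. w i * (U i - Zp i)) = 0" using Z0 by simp
    then show ?thesis by (simp add: algebra_simps sum_subtractf)
  qed
  have wZp: "(\<Sum>i<N. w i * Zp i) = (\<Sum>k<r. \<phi> k * (\<Sum>i<N. w i * Z i k))"
  proof -
    have "(\<Sum>i<N. w i * Zp i) = (\<Sum>i<N. \<Sum>k<r. \<phi> k * (w i * Z i k))"
      unfolding Zp_def sum_distrib_left by (simp add: mult_ac)
    also have "\<dots> = (\<Sum>k<r. \<Sum>i<N. \<phi> k * (w i * Z i k))" by (rule sum.swap)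
    finally show ?thesis by (simp add: sum_distrib_left)
  qed
  have AAeq: "AA = \<phi> 0 * (sN * p) + (\<Sum>k\<in>{1..<r}. \<phi> k * B k)"
  proof -
    have "AA = (1 / sN) * (\<Sum>k<r. \<phi> k * (\<Sum>i<N. w i * Z i k))"
      unfolding AA_def sN_def NE0 wZp ..
    also have "\<dots> = (\<Sum>k<r. \<phi> k * B k)"
      unfolding B_def sN_def by (simp add: sum_distrib_left mult_ac)
    also have "\<dots> = \<phi> 0 * B 0 + (\<Sum>k\<in>{1..<r}. \<phi> k * B k)" by (rule sum_split0[OF r])
    also have "B 0 = sN * p"
    proof -
      have "(\<Sum>i<N. w i * Z i 0) = P" unfolding P_def using Z0 by simp
      then have "B 0 = (1 / sN) * P" unfolding B_def sN_def by simp
      also have "\<dots> = sN * p"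
      proof -
        have nn: "real N = sN * sN" using sNsq by simp
        show ?thesis unfolding p_def nn using sN by (simp add: field_simps)
      qed
      finally show ?thesis .
    qed
    finally show ?thesis .
  qed
  have D0: "Dk 0 = sN"
  proof -
    have "(\<Sum>i<N. Z i 0) = real N" using Z0 by simp
    then have "Dk 0 = real N / sN" unfolding Dk_def sN_def by simp
    also have "\<dots> = sN" using sNsq sN by (simp add: field_simps)
    finally show ?thesis .
  qed
  have Teq: "(\<Sum>k<r. \<phi> k * Dk k) - AA / \<rho> = AA * (1 / p - 1 / \<rho>) + (\<Sum>k\<in>{1..<r}. \<phi> k * (Dk k - B k / p))"
  proof -
    have f0: "\<phi> 0 * sN = (AA - (\<Sum>k\<in>{1..<r}. \<phi> k * B k)) / p"
      using AAeq ppos by (simp add: field_simps)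
    have "(\<Sum>k<r. \<phi> k * Dk k) = \<phi> 0 * sN + (\<Sum>k\<in>{1..<r}. \<phi> k * Dk k)"
      using sum_split0[OF r, of "\<lambda>k. \<phi> k * Dk k"] D0 by simp
    moreover have "(\<Sum>k\<in>{1..<r}. \<phi> k * (Dk k - B k / p)) = (\<Sum>k\<in>{1..<r}. \<phi> k * Dk k) - (\<Sum>k\<in>{1..<r}. \<phi> k * B k) / p"
      by (simp add: right_diff_distrib sum_subtractf sum_divide_distrib)
    moreover have alg: "(a - b) / p + c - a / \<rho> = a * (1 / p - 1 / \<rho>) + (c - b / p)" for a b c :: real
      by (simp add: diff_divide_distrib right_diff_distrib)
    ultimately show ?thesis unfolding f0 by simp
  qed
  have b1: "\<bar>AA * (1 / p - 1 / \<rho>)\<bar> \<le> C * (2 * \<eta> / \<rho>\<^sup>2)"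
  proof -
    have pr: "p * \<rho> > 0" using ppos \<rho> by simp
    have e1: "1 / p - 1 / \<rho> = (\<rho> - p) / (p * \<rho>)" using ppos \<rho> by (simp add: field_simps)
    have e2: "\<bar>(\<rho> - p) / (p * \<rho>)\<bar> = \<bar>\<rho> - p\<bar> / (p * \<rho>)" by (rule abs_div_pos[OF pr, symmetric])
    have e3: "\<bar>\<rho> - p\<bar> \<le> \<eta>" using hp by (simp only: abs_minus_commute)
    have e4: "\<bar>\<rho> - p\<bar> / (p * \<rho>) \<le> \<eta> / (p * \<rho>)" using divide_right_mono[OF e3, of "p * \<rho>"] pr by simp
    have "\<rho> * \<rho> \<le> (2 * p) * \<rho>" using pge \<rho> by (intro mult_right_mono) auto
    then have "\<rho>\<^sup>2 / 2 \<le> p * \<rho>" by (simp add: power2_eq_square)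
    then have "\<eta> / (p * \<rho>) \<le> \<eta> / (\<rho>\<^sup>2 / 2)" using \<eta> \<rho> by (intro frac_le) auto
    then have e5: "\<eta> / (p * \<rho>) \<le> 2 * \<eta> / \<rho>\<^sup>2" by (simp add: mult.commute)
    have "\<bar>1 / p - 1 / \<rho>\<bar> \<le> 2 * \<eta> / \<rho>\<^sup>2" unfolding e1 e2 using e4 e5 by (rule order_trans)


    then show ?thesis unfolding abs_mult using hA C unfolding AA_def
      by (intro mult_mono) auto
  qed
  have b2: "\<bar>\<Sum>k\<in>{1..<r}. \<phi> k * (Dk k - B k / p)\<bar> \<le> s1 * (C + 2 * C / \<rho>)"
  proof -
    have ip: "1 / p \<le> 2 / \<rho>" using pge \<rho> ppos by (simp add: field_simps)
    have "\<bar>\<Sum>k\<in>{1..<r}. \<phi> k * (Dk k - B k / p)\<bar> \<le> (\<Sum>k\<in>{1..<r}. \<bar>\<phi> k\<bar> * (C + 2 * C / \<rho>))"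
    proof (rule order_trans[OF sum_abs], intro sum_mono)
      fix k assume k: "k \<in> {1..<r}"
      have "\<bar>B k / p\<bar> = \<bar>B k\<bar> / p" by (rule abs_div_pos[OF ppos, symmetric])
      also have "\<dots> = \<bar>B k\<bar> * (1 / p)" by simp
      also have "\<dots> \<le> C * (2 / \<rho>)" using hB[OF k] ip ppos C unfolding B_def
        by (intro mult_mono) auto
      finally have bb: "\<bar>B k / p\<bar> \<le> C * (2 / \<rho>)" .
      have dd: "\<bar>Dk k\<bar> \<le> C" using hD[OF k] unfolding Dk_def .
      have "\<bar>Dk k - B k / p\<bar> \<le> \<bar>Dk k\<bar> + \<bar>B k / p\<bar>" by (rule abs_triangle_ineq4)
      moreover have "C * (2 / \<rho>) = 2 * C / \<rho>" by simp
      ultimately have "\<bar>Dk k - B k / p\<bar> \<le> C + 2 * C / \<rho>" using bb dd by linarith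
      then show "\<bar>\<phi> k * (Dk k - B k / p)\<bar> \<le> \<bar>\<phi> k\<bar> * (C + 2 * C / \<rho>)"
        unfolding abs_mult by (intro mult_left_mono) auto
    qed
    also have "\<dots> = (\<Sum>k\<in>{1..<r}. \<bar>\<phi> k\<bar>) * (C + 2 * C / \<rho>)" by (simp add: sum_distrib_right)
    also have "\<dots> \<le> s1 * (C + 2 * C / \<rho>)"
    proof (rule mult_right_mono)
      show "(\<Sum>k\<in>{1..<r}. \<bar>\<phi> k\<bar>) \<le> s1" unfolding s1_def
        by (rule sum_mono2) auto
      show "0 \<le> C + 2 * C / \<rho>" using C \<rho> by simp
    qed
    finally show ?thesis .
  qed
  have "\<bar>(\<Sum>k<r. \<phi> k * Dk k) - AA / \<rho>\<bar> \<le> C * (2 * \<eta> / \<rho>\<^sup>2) + s1 * (C + 2 * C / \<rho>)"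
    unfolding Teq using b1 b2 abs_triangle_ineq[of "AA * (1 / p - 1 / \<rho>)" "\<Sum>k\<in>{1..<r}. \<phi> k * (Dk k - B k / p)"] by linarith
  also have "\<dots> \<le> 2 * C * \<eta> / \<rho>\<^sup>2 + (2 * real r * \<eta> / \<rho>) * (C + 2 * C / \<rho>)"
  proof -
    have "s1 * (C + 2 * C / \<rho>) \<le> (2 * real r * \<eta> / \<rho>) * (C + 2 * C / \<rho>)"
      using s1b C \<rho> by (intro mult_right_mono) auto
    moreover have "C * (2 * \<eta> / \<rho>\<^sup>2) = 2 * C * \<eta> / \<rho>\<^sup>2" by simp
    ultimately show ?thesis by linarith
  qed
  finally show ?thesis unfolding Dk_def AA_def by simp
qed




lemma quad_real:
  fixes A B :: real
  assumes all: "\<And>t. 0 \<le> - 2 * t * A + t\<^sup>2 * B" and B: "B \<ge> 0"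
  shows "A = 0"
proof -
  define t where "t = A / (B + 1)"
  have B1: "B + 1 > 0" using B by simp
  have ut: "(B + 1) * t = A" unfolding t_def using B1 by simp
  have "(B + 1)\<^sup>2 * (- 2 * t * A + t\<^sup>2 * B) = - 2 * ((B + 1) * t) * A * (B + 1) + ((B + 1) * t)\<^sup>2 * B"
    by (simp add: power2_eq_square algebra_simps)
  also have "\<dots> = - (A\<^sup>2 * (B + 2))" unfolding ut by (simp add: power2_eq_square algebra_simps)
  finally have eq: "(B + 1)\<^sup>2 * (- 2 * t * A + t\<^sup>2 * B) = - (A\<^sup>2 * (B + 2))" .
  have "0 \<le> (B + 1)\<^sup>2 * (- 2 * t * A + t\<^sup>2 * B)" using all[of t] by simp
  then have "A\<^sup>2 * (B + 2) \<le> 0" unfolding eq by simp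
  moreover have "A\<^sup>2 * (B + 2) \<ge> 0" using B by simp
  ultimately have "A\<^sup>2 * (B + 2) = 0" by linarith
  then show ?thesis using B by simp
qed

lemma quad_zero:
  fixes r z :: "nat \<Rightarrow> real"
  assumes opt: "\<And>t. (\<Sum>i\<in>S. (r i)\<^sup>2) \<le> (\<Sum>i\<in>S. (r i - t * z i)\<^sup>2)"
  shows "(\<Sum>i\<in>S. r i * z i) = 0"
proof (rule quad_real)
  fix t :: real
  have "(\<Sum>i\<in>S. (r i - t * z i)\<^sup>2) = (\<Sum>i\<in>S. (r i)\<^sup>2) + (- 2 * t * (\<Sum>i\<in>S. r i * z i) + t\<^sup>2 * (\<Sum>i\<in>S. (z i)\<^sup>2))"
  proof -
    have "(\<Sum>i\<in>S. (r i - t * z i)\<^sup>2) = (\<Sum>i\<in>S. (r i)\<^sup>2 + (- 2 * t * (r i * z i) + t\<^sup>2 * (z i)\<^sup>2))"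
      by (rule sum.cong) (simp_all add: power2_eq_square algebra_simps)
    also have "\<dots> = (\<Sum>i\<in>S. (r i)\<^sup>2) + (- 2 * t * (\<Sum>i\<in>S. r i * z i) + t\<^sup>2 * (\<Sum>i\<in>S. (z i)\<^sup>2))"
      by (simp only: sum.distrib sum_distrib_left[symmetric])
    finally show ?thesis .
  qed
  then show "0 \<le> - 2 * t * (\<Sum>i\<in>S. r i * z i) + t\<^sup>2 * (\<Sum>i\<in>S. (z i)\<^sup>2)"
    using opt[of t] by linarith
qed (simp add: sum_nonneg)

lemma ols_normal:
  fixes y :: "nat \<Rightarrow> real" and x :: "nat \<Rightarrow> nat \<Rightarrow> real"
  assumes opt: "\<forall>a' b'. (\<Sum>i\<in>S. (y i - a - (\<Sum>j<K. x i j * b j))\<^sup>2) \<le> (\<Sum>i\<in>S. (y i - a' - (\<Sum>j<K. x i j * b' j))\<^sup>2)"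
  shows "(\<Sum>i\<in>S. (y i - a - (\<Sum>j<K. x i j * b j))) = 0"
    and "\<And>j. j < K \<Longrightarrow> (\<Sum>i\<in>S. (y i - a - (\<Sum>j<K. x i j * b j)) * x i j) = 0"
proof -
  define res where "res i = y i - a - (\<Sum>j<K. x i j * b j)" for i
  have "(\<Sum>i\<in>S. res i * 1) = 0"
  proof (rule quad_zero)
    fix t
    show "(\<Sum>i\<in>S. (res i)\<^sup>2) \<le> (\<Sum>i\<in>S. (res i - t * 1)\<^sup>2)"
      using opt[rule_format, of "a + t" b] unfolding res_def by (simp add: algebra_simps)
  qed
  then show "(\<Sum>i\<in>S. (y i - a - (\<Sum>j<K. x i j * b j))) = 0" unfolding res_def by simp
  fix j assume j: "j < K"
  have "(\<Sum>i\<in>S. res i * x i j) = 0"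
  proof (rule quad_zero)
    fix t
    define b' where "b' j' = b j' + (if j' = j then t else 0)" for j'
    have "(\<Sum>j'<K. x i j' * b' j') = (\<Sum>j'<K. x i j' * b j' + (if j' = j then t * x i j else 0))" for i
      by (rule sum.cong) (auto simp: b'_def algebra_simps)
    also have "\<dots> i = (\<Sum>j'<K. x i j' * b j') + t * x i j" for i
      using j by (simp add: sum.distrib)
    finally have eqr: "y i - a - (\<Sum>j'<K. x i j' * b' j') = res i - t * x i j" for i
      unfolding res_def by simp
    have "(\<Sum>i\<in>S. (res i)\<^sup>2) \<le> (\<Sum>i\<in>S. (y i - a - (\<Sum>j'<K. x i j' * b' j'))\<^sup>2)"
      using opt unfolding res_def by blast
    also have "\<dots> = (\<Sum>i\<in>S. (res i - t * x i j)\<^sup>2)" unfolding eqr ..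
    finally show "(\<Sum>i\<in>S. (res i)\<^sup>2) \<le> (\<Sum>i\<in>S. (res i - t * x i j)\<^sup>2)" .
  qed
  then show "(\<Sum>i\<in>S. (y i - a - (\<Sum>j<K. x i j * b j)) * x i j) = 0" unfolding res_def by simp
qed

lemma Yobs_sel:
  fixes Wv Yv :: "nat \<Rightarrow> real"
  assumes vals: "\<forall>h\<in>{1..G}. Wv h = 0 \<or> Wv h = 1" and s1: "(\<Sum>h\<in>{1..G}. Wv h) = 1"
    and g: "g \<in> {1..G}" and wg: "Wv g = 1"
  shows "(\<Sum>h\<in>{1..G}. Wv h * Yv h) = Yv g"
proof -
  have fin: "finite ({1..G} - {g})" by simp
  have "(\<Sum>h\<in>{1..G}. Wv h) = Wv g + (\<Sum>h\<in>{1..G} - {g}. Wv h)"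
    using g by (simp add: sum.remove)
  then have z: "(\<Sum>h\<in>{1..G} - {g}. Wv h) = 0" using s1 wg by simp
  have nn: "\<forall>h\<in>{1..G} - {g}. 0 \<le> Wv h" using vals by auto
  have "\<forall>h\<in>{1..G} - {g}. Wv h = 0" using sum_nonneg_eq_0_iff[OF fin] nn z by blast
  then have "(\<Sum>h\<in>{1..G} - {g}. Wv h * Yv h) = 0" by simp
  moreover have "(\<Sum>h\<in>{1..G}. Wv h * Yv h) = Wv g * Yv g + (\<Sum>h\<in>{1..G} - {g}. Wv h * Yv h)"
    using g by (simp add: sum.remove)
  ultimately show ?thesis using wg by simp
qed

lemma sum_S:
  fixes w f :: "nat \<Rightarrow> real"
  assumes "\<And>i. i < N \<Longrightarrow> w i = 0 \<or> w i = 1"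
  shows "(\<Sum>i\<in>{i. i < N \<and> w i = 1}. f i) = (\<Sum>i<N. w i * f i)"
proof -
  have "(\<Sum>i<N. w i * f i) = (\<Sum>i<N. if w i = 1 then f i else 0)"
    using assms by (intro sum.cong) auto
  also have "\<dots> = (\<Sum>i\<in>{..<N} \<inter> {i. w i = 1}. f i)"
    by (simp add: sum.inter_restrict)
  also have "{..<N} \<inter> {i. w i = 1} = {i. i < N \<and> w i = 1}" by auto
  finally show ?thesis by simp
qed

context prob_space begin

lemma iid_comp:
  assumes meas: "\<And>i. D i \<in> measurable M S" and ind: "indep_vars (\<lambda>_. S) D UNIV"
    and ident: "\<And>i. distr M S (D i) = distr M S (D 0)" and f: "f \<in> borel_measurable S"
  shows "indep_vars (\<lambda>_. borel) (\<lambda>i \<omega>. (f::_\<Rightarrow>real) (D i \<omega>)) UNIV"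
    and "\<And>i. (\<lambda>\<omega>. f (D i \<omega>)) \<in> borel_measurable M"
    and "\<And>i. distr M borel (\<lambda>\<omega>. f (D i \<omega>)) = distr M borel (\<lambda>\<omega>. f (D 0 \<omega>))"
proof -
  show "indep_vars (\<lambda>_. borel) (\<lambda>i \<omega>. f (D i \<omega>)) UNIV"
    by (rule indep_vars_compose2[OF ind]) (rule f)
  show "(\<lambda>\<omega>. f (D i \<omega>)) \<in> borel_measurable M" for i
    using measurable_compose[OF meas f] .
  show "distr M borel (\<lambda>\<omega>. f (D i \<omega>)) = distr M borel (\<lambda>\<omega>. f (D 0 \<omega>))" for i
  proof -
    have "distr M borel (\<lambda>\<omega>. f (D i \<omega>)) = distr (distr M S (D i)) borel f"
      using distr_distr[OF f meas[of i]] by (simp add: comp_def)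
    also have "\<dots> = distr (distr M S (D 0)) borel f" by (simp only: ident[of i])
    also have "\<dots> = distr M borel (\<lambda>\<omega>. f (D 0 \<omega>))"
      using distr_distr[OF f meas[of 0]] by (simp add: comp_def)
    finally show ?thesis .
  qed
qed

lemma AE_transfer:
  assumes meas: "\<And>i. D i \<in> measurable M S"
    and ident: "\<And>i. distr M S (D i) = distr M S (D 0)"
    and P: "{x\<in>space S. P x} \<in> sets S"
    and ae: "AE \<omega> in M. P (D 0 \<omega>)"
  shows "AE \<omega> in M. P (D i \<omega>)"
proof -
  have "AE x in distr M S (D 0). P x" using AE_distr_iff[OF meas P] ae by simp
  then have "AE x in distr M S (D i). P x" by (simp only: ident[of i])
  then show ?thesis using AE_distr_iff[OF meas P] by simp
qed

lemma wlln_D: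
  assumes meas: "\<And>i. D i \<in> measurable M S" and ind: "indep_vars (\<lambda>_. S) D UNIV"
    and ident: "\<And>i. distr M S (D i) = distr M S (D 0)" and f: "f \<in> borel_measurable S"
    and int: "integrable M (\<lambda>\<omega>. f (D 0 \<omega>))" and \<eta>: "\<eta> > 0" and \<delta>: "\<delta> > 0"
  shows "eventually (\<lambda>N. prob {\<omega>\<in>space M. \<eta> < \<bar>(\<Sum>i<N. f (D i \<omega>)) / real N - expectation (\<lambda>\<omega>. f (D 0 \<omega>))\<bar>} \<le> \<delta>) sequentially"
proof -
  obtain N0 where "\<forall>N\<ge>N0. prob {\<omega>\<in>space M. \<eta> < \<bar>(\<Sum>i<N. f (D i \<omega>)) / real N - expectation (\<lambda>\<omega>. f (D 0 \<omega>))\<bar>} \<le> \<delta>"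
    using wlln[OF iid_comp[OF meas ind ident f] int \<eta> \<delta>] by blast
  then show ?thesis unfolding eventually_sequentially by blast
qed

lemma bip_D:
  assumes meas: "\<And>i. D i \<in> measurable M S" and ind: "indep_vars (\<lambda>_. S) D UNIV"
    and ident: "\<And>i. distr M S (D i) = distr M S (D 0)" and f: "f \<in> borel_measurable S"
    and sq: "integrable M (\<lambda>\<omega>. (f (D 0 \<omega>))\<^sup>2)" and m0: "expectation (\<lambda>\<omega>. f (D 0 \<omega>)) = 0"
    and \<delta>: "\<delta> > 0"
  shows "\<exists>C>0. \<forall>N. prob {\<omega>\<in>space M. C < \<bar>(1 / sqrt (real N)) * (\<Sum>i<N. f (D i \<omega>))\<bar>} \<le> \<delta>"
  using bounded_in_prob[OF iid_comp[OF meas ind ident f] sq m0 \<delta>] by simp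

end

lemma lin_proj_foc:
  assumes P: "prob_space M" and lp: "is_lin_proj M K V Z b"
    and LZ: "L2 M Z" and LV: "\<And>j. j < K \<Longrightarrow> L2 M (\<lambda>\<omega>. V \<omega> j)" and j: "j < K"
  shows "(\<integral>\<omega>. (Z \<omega> - (\<Sum>j'<K. V \<omega> j' * b j')) * V \<omega> j \<partial>M) = 0"
proof -
  define R where "R \<omega> = Z \<omega> - (\<Sum>j'<K. V \<omega> j' * b j')" for \<omega>
  have LR: "L2 M R" unfolding R_def by (intro L2_diff LZ L2_sum) (auto intro!: L2_scale[of M "\<lambda>\<omega>. V \<omega> _" , simplified mult.commute] LV simp: mult.commute)
  have LVj: "L2 M (\<lambda>\<omega>. V \<omega> j)" using LV j .
  show ?thesis unfolding R_def[symmetric]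
  proof (rule quad_real)
    fix t :: real
    define b' where "b' j' = b j' + (if j' = j then t else 0)" for j'
    have "(\<Sum>j'<K. V \<omega> j' * b' j') = (\<Sum>j'<K. V \<omega> j' * b j' + (if j' = j then t * V \<omega> j else 0))" for \<omega>
      by (rule sum.cong) (auto simp: b'_def algebra_simps)
    also have "\<dots> \<omega> = (\<Sum>j'<K. V \<omega> j' * b j') + t * V \<omega> j" for \<omega>
      using j by (simp add: sum.distrib)
    finally have eq: "Z \<omega> - (\<Sum>j'<K. V \<omega> j' * b' j') = R \<omega> - t * V \<omega> j" for \<omega>
      unfolding R_def by simp
    have "(\<integral>\<omega>. (Z \<omega> - (\<Sum>j'<K. V \<omega> j' * b j'))\<^sup>2 \<partial>M) \<le> (\<integral>\<omega>. (Z \<omega> - (\<Sum>j'<K. V \<omega> j' * b' j'))\<^sup>2 \<partial>M)"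
      using lp unfolding is_lin_proj_def by blast
    then have "(\<integral>\<omega>. (R \<omega>)\<^sup>2 \<partial>M) \<le> (\<integral>\<omega>. (R \<omega> - t * V \<omega> j)\<^sup>2 \<partial>M)"
      unfolding eq R_def .
    also have "(\<integral>\<omega>. (R \<omega> - t * V \<omega> j)\<^sup>2 \<partial>M)
        = (\<integral>\<omega>. (R \<omega>)\<^sup>2 \<partial>M) + (- 2 * t * (\<integral>\<omega>. R \<omega> * V \<omega> j \<partial>M) + t\<^sup>2 * (\<integral>\<omega>. (V \<omega> j)\<^sup>2 \<partial>M))"
    proof -
      have i1: "integrable M (\<lambda>\<omega>. (R \<omega>)\<^sup>2)" using LR unfolding L2_def by simp
      have i2: "integrable M (\<lambda>\<omega>. R \<omega> * V \<omega> j)" by (rule L2_mult[OF LR LVj])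
      have i3: "integrable M (\<lambda>\<omega>. (V \<omega> j)\<^sup>2)" using LVj unfolding L2_def by simp
      have "(\<lambda>\<omega>. (R \<omega> - t * V \<omega> j)\<^sup>2) = (\<lambda>\<omega>. (R \<omega>)\<^sup>2 + ((- 2 * t) * (R \<omega> * V \<omega> j) + t\<^sup>2 * (V \<omega> j)\<^sup>2))"
        by (simp add: fun_eq_iff power2_eq_square algebra_simps)
      then show ?thesis using i1 i2 i3 by simp
    qed
    finally show "0 \<le> - 2 * t * (\<integral>\<omega>. R \<omega> * V \<omega> j \<partial>M) + t\<^sup>2 * (\<integral>\<omega>. (V \<omega> j)\<^sup>2 \<partial>M)" by linarith
  qed (simp)
qed




lemma US_meas:
  assumes g: "g \<in> {1..G}" and j: "j < K"
  shows "(\<lambda>x. fst x g) \<in> borel_measurable (unit_space G K)"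
    and "(\<lambda>x. fst (snd x) g) \<in> borel_measurable (unit_space G K)"
    and "(\<lambda>x. snd (snd x) j) \<in> borel_measurable (unit_space G K)"
proof -
  have j': "j \<in> {..<K}" using j by simp
  show "(\<lambda>x. fst x g) \<in> borel_measurable (unit_space G K)"
    unfolding unit_space_def
    using measurable_compose[OF measurable_fst measurable_component_singleton[OF g]] by simp
  show "(\<lambda>x. fst (snd x) g) \<in> borel_measurable (unit_space G K)"
    unfolding unit_space_def
    using measurable_compose[OF measurable_compose[OF measurable_snd measurable_fst] measurable_component_singleton[OF g]] by simp
  show "(\<lambda>x. snd (snd x) j) \<in> borel_measurable (unit_space G K)"
    unfolding unit_space_def
    using measurable_compose[OF measurable_compose[OF measurable_snd measurable_snd] measurable_component_singleton[OF j']] by simp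
qed

lemma snd_meas:
  "snd \<in> measurable (unit_space G K) (PiM {1..G} (\<lambda>_. borel) \<Otimes>\<^sub>M PiM {..<K} (\<lambda>_. borel))"
  unfolding unit_space_def by measurable

lemma YX_meas:
  assumes g: "g \<in> {1..G}" and j: "j < K"
  shows "(\<lambda>x. fst x g) \<in> borel_measurable (PiM {1..G} (\<lambda>_. borel) \<Otimes>\<^sub>M PiM {..<K} (\<lambda>_. borel))"
    and "(\<lambda>x. snd x j) \<in> borel_measurable (PiM {1..G} (\<lambda>_. borel) \<Otimes>\<^sub>M PiM {..<K} (\<lambda>_. borel))"
proof -
  have j': "j \<in> {..<K}" using j by simp
  show "(\<lambda>x. fst x g) \<in> borel_measurable (PiM {1..G} (\<lambda>_. borel) \<Otimes>\<^sub>M PiM {..<K} (\<lambda>_. borel))"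
    using measurable_compose[OF measurable_fst[of "PiM {1..G} (\<lambda>_. borel)" "PiM {..<K} (\<lambda>_. borel)"] measurable_component_singleton[OF g, of "\<lambda>_. borel"]] by simp
  show "(\<lambda>x. snd x j) \<in> borel_measurable (PiM {1..G} (\<lambda>_. borel) \<Otimes>\<^sub>M PiM {..<K} (\<lambda>_. borel))"
    using measurable_compose[OF measurable_snd[of "PiM {1..G} (\<lambda>_. borel)" "PiM {..<K} (\<lambda>_. borel)"] measurable_component_singleton[OF j', of "\<lambda>_. borel"]] by simp
qed

lemma (in prob_space) indep_set_mono:
  "indep_set A B \<Longrightarrow> A' \<subseteq> A \<Longrightarrow> B' \<subseteq> B \<Longrightarrow> indep_set A' B'"
  unfolding indep_set_def by (rule indep_sets_mono_sets) (auto split: bool.split)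

lemma (in prob_space) sigma_comp_sub:
  assumes Xp: "Xp \<in> measurable M S" and f: "f \<in> measurable S T"
  shows "sigma_sets (space M) {(\<lambda>\<omega>. f (Xp \<omega>)) -` A \<inter> space M | A. A \<in> sets T}
         \<subseteq> sigma_sets (space M) {Xp -` A \<inter> space M | A. A \<in> sets S}"
proof (rule sigma_sets_mono, safe)
  fix A assume A: "A \<in> sets T"
  have "(\<lambda>\<omega>. f (Xp \<omega>)) -` A \<inter> space M = Xp -` (f -` A \<inter> space S) \<inter> space M"
    using measurable_space[OF Xp] by auto
  moreover have "f -` A \<inter> space S \<in> sets S" using measurable_sets[OF f A] .
  ultimately have "(\<lambda>\<omega>. f (Xp \<omega>)) -` A \<inter> space M \<in> {Xp -` A \<inter> space M | A. A \<in> sets S}"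
    by blast
  then show "(\<lambda>\<omega>. f (Xp \<omega>)) -` A \<inter> space M \<in> sigma_sets (space M) {Xp -` A \<inter> space M | A. A \<in> sets S}"
    by (rule sigma_sets.Basic)
qed

lemma indep_W_YX:
  fixes M :: "'a measure"
  assumes P: "prob_space M" and meas: "unit_data G K W Y X 0 \<in> measurable M (unit_space G K)"
    and Wi: "prob_space.indep_set M
                   (sigma_sets (space M) {(\<lambda>\<omega>. restrict (W 0 \<omega>) {1..G}) -` A \<inter> space M
                      | A. A \<in> sets (PiM {1..G} (\<lambda>_. borel))})
                   (sigma_sets (space M) {(\<lambda>\<omega>. (restrict (Y 0 \<omega>) {1..G}, restrict (X 0 \<omega>) {..<K})) -` A \<inter> space M
                      | A. A \<in> sets (PiM {1..G} (\<lambda>_. borel) \<Otimes>\<^sub>M PiM {..<K} (\<lambda>_. borel))})"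
    and g: "g \<in> {1..G}"
    and h: "h \<in> borel_measurable (PiM {1..G} (\<lambda>_. borel) \<Otimes>\<^sub>M PiM {..<K} (\<lambda>_. borel))"
    and iw: "integrable M (\<lambda>\<omega>. W 0 \<omega> g)"
    and ih: "integrable M (\<lambda>\<omega>. h (snd (unit_data G K W Y X 0 \<omega>)))"
  shows "integrable M (\<lambda>\<omega>. W 0 \<omega> g * h (snd (unit_data G K W Y X 0 \<omega>)))"
    and "(\<integral>\<omega>. W 0 \<omega> g * h (snd (unit_data G K W Y X 0 \<omega>)) \<partial>M)
          = (\<integral>\<omega>. W 0 \<omega> g \<partial>M) * (\<integral>\<omega>. h (snd (unit_data G K W Y X 0 \<omega>)) \<partial>M)"
proof -
  interpret prob_space M by (rule P)
  define Wp where "Wp \<omega> = restrict (W 0 \<omega>) {1..G}" for \<omega>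
  define YXp where "YXp \<omega> = (restrict (Y 0 \<omega>) {1..G}, restrict (X 0 \<omega>) {..<K})" for \<omega>
  have D: "unit_data G K W Y X 0 = (\<lambda>\<omega>. (Wp \<omega>, YXp \<omega>))"
    unfolding unit_data_def Wp_def YXp_def by simp
  have meas': "unit_data G K W Y X 0 \<in> measurable M (PiM {1..G} (\<lambda>_. borel) \<Otimes>\<^sub>M (PiM {1..G} (\<lambda>_. borel) \<Otimes>\<^sub>M PiM {..<K} (\<lambda>_. borel)))"
    using meas unfolding unit_space_def .
  have mWp: "Wp \<in> measurable M (PiM {1..G} (\<lambda>_. borel))"
    using measurable_compose[OF meas' measurable_fst] unfolding D by simp
  have mYX: "YXp \<in> measurable M (PiM {1..G} (\<lambda>_. borel) \<Otimes>\<^sub>M PiM {..<K} (\<lambda>_. borel))"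
    using measurable_compose[OF meas' measurable_snd] unfolding D by simp
  have pg: "(\<lambda>f. f g) \<in> measurable (PiM {1..G} (\<lambda>_. borel)) (borel :: real measure)"
    using g by measurable
  have e1: "(\<lambda>\<omega>. Wp \<omega> g) = (\<lambda>\<omega>. W 0 \<omega> g)" using g unfolding Wp_def by (auto simp: fun_eq_iff)
  have e2: "(\<lambda>\<omega>. h (YXp \<omega>)) = (\<lambda>\<omega>. h (snd (unit_data G K W Y X 0 \<omega>)))" unfolding D by simp
  have iv3: "indep_var borel (\<lambda>\<omega>. W 0 \<omega> g) borel (\<lambda>\<omega>. h (snd (unit_data G K W Y X 0 \<omega>)))"
    unfolding indep_var_eq
  proof (intro conjI)
    show "random_variable borel (\<lambda>\<omega>. W 0 \<omega> g)" using measurable_compose[OF mWp pg] unfolding e1 .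
    show "random_variable borel (\<lambda>\<omega>. h (snd (unit_data G K W Y X 0 \<omega>)))"
      using measurable_compose[OF mYX h] unfolding e2 .
    show "indep_set (sigma_sets (space M) {(\<lambda>\<omega>. W 0 \<omega> g) -` A \<inter> space M |A. A \<in> sets borel})
       (sigma_sets (space M) {(\<lambda>\<omega>. h (snd (unit_data G K W Y X 0 \<omega>))) -` A \<inter> space M |A. A \<in> sets borel})"
      using Wi unfolding e1[symmetric] e2[symmetric] Wp_def[abs_def, symmetric] YXp_def[abs_def, symmetric]
      by (rule indep_set_mono) (intro sigma_comp_sub[OF mWp pg] sigma_comp_sub[OF mYX h])+
  qed
  show "integrable M (\<lambda>\<omega>. W 0 \<omega> g * h (snd (unit_data G K W Y X 0 \<omega>)))"
    by (rule indep_var_integrable[OF iv3 iw ih])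
  show "(\<integral>\<omega>. W 0 \<omega> g * h (snd (unit_data G K W Y X 0 \<omega>)) \<partial>M)
          = (\<integral>\<omega>. W 0 \<omega> g \<partial>M) * (\<integral>\<omega>. h (snd (unit_data G K W Y X 0 \<omega>)) \<partial>M)"
    by (rule indep_var_lebesgue_integral[OF iv3 iw ih])
qed




lemma bridge:
  fixes N K r :: nat and wv Yv Yo :: "nat \<Rightarrow> real" and Xv Zv :: "nat \<Rightarrow> nat \<Rightarrow> real"
    and c t :: "nat \<Rightarrow> nat \<Rightarrow> real" and a mu \<rho> :: real and b \<beta> muX :: "nat \<Rightarrow> real"
  assumes N: "N > 0" and r: "r > 0"
    and w01: "\<And>i. i < N \<Longrightarrow> wv i = 0 \<or> wv i = 1"
    and Yob: "\<And>i. i < N \<Longrightarrow> wv i = 1 \<Longrightarrow> Yo i = Yv i"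
    and Zv0: "\<And>i. i < N \<Longrightarrow> Zv i 0 = 1"
    and repr: "\<And>i j. i < N \<Longrightarrow> j < K \<Longrightarrow> Xv i j = (\<Sum>k<r. c (Suc j) k * Zv i k)"
    and Zdef: "\<And>i k. i < N \<Longrightarrow> k < r \<Longrightarrow> Zv i k = (\<Sum>j<Suc K. t k j * (if j = 0 then 1 else if j \<le> K then Xv i (j - 1) else 0))"
    and ols: "\<forall>a' b'. (\<Sum>i\<in>{i. i < N \<and> wv i = 1}. (Yo i - a - (\<Sum>j<K. Xv i j * b j))\<^sup>2)
             \<le> (\<Sum>i\<in>{i. i < N \<and> wv i = 1}. (Yo i - a' - (\<Sum>j<K. Xv i j * b' j))\<^sup>2)"
  defines "U \<equiv> \<lambda>i. Yv i - mu - (\<Sum>j<K. (Xv i j - muX j) * \<beta> j)"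
    and "\<phi> \<equiv> \<lambda>k. ((if k = 0 then a else 0) + (\<Sum>j<K. b j * c (Suc j) k))
              - ((if k = 0 then mu - (\<Sum>j<K. muX j * \<beta> j) else 0) + (\<Sum>j<K. \<beta> j * c (Suc j) k))"
  shows "\<And>k. k < r \<Longrightarrow> (\<Sum>i<N. wv i * (U i - (\<Sum>l<r. Zv i l * \<phi> l)) * Zv i k) = 0"
    and "sqrt (real N) * ((a + (\<Sum>j<K. ((\<Sum>i<N. Xv i j) / real N) * b j)) - mu)
           - (1 / sqrt (real N)) * (\<Sum>i<N. (\<Sum>j<K. (Xv i j - muX j) * \<beta> j) + wv i * U i / \<rho>)
         = (\<Sum>k<r. \<phi> k * ((1 / sqrt (real N)) * (\<Sum>i<N. Zv i k))) - (1 / sqrt (real N)) * (\<Sum>i<N. wv i * U i) / \<rho>"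
proof -
  define th where "th a' b' k = (if k = 0 then a' else 0) + (\<Sum>j<K. b' j * c (Suc j) k)" for a' b' k
  have pred: "a' + (\<Sum>j<K. Xv i j * b' j) = (\<Sum>k<r. Zv i k * th a' b' k)" if i: "i < N" for i a' b'
  proof -
    have pt: "Zv i k * th a' b' k = (if k = 0 then a' * Zv i k else 0) + (\<Sum>j<K. b' j * (c (Suc j) k * Zv i k))" for k
      unfolding th_def by (simp add: distrib_left sum_distrib_left mult_ac)
    have "(\<Sum>k<r. Zv i k * th a' b' k) = (\<Sum>k<r. (if k = 0 then a' * Zv i k else 0)) + (\<Sum>k<r. \<Sum>j<K. b' j * (c (Suc j) k * Zv i k))"
      unfolding pt by (rule sum.distrib)
    also have "(\<Sum>k<r. (if k = 0 then a' * Zv i k else 0)) = a'" using r Zv0[OF i] by simp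
    also have "(\<Sum>k<r. \<Sum>j<K. b' j * (c (Suc j) k * Zv i k)) = (\<Sum>j<K. \<Sum>k<r. b' j * (c (Suc j) k * Zv i k))"
      by (rule sum.swap)
    also have "\<dots> = (\<Sum>j<K. Xv i j * b' j)"
      using repr[OF i] by (simp add: sum_distrib_left mult.commute)
    finally show ?thesis by simp
  qed
  have phi_th: "\<phi> k = th a b k - th (mu - (\<Sum>j<K. muX j * \<beta> j)) \<beta> k" for k
    unfolding \<phi>_def th_def by simp
  have diff: "(a + (\<Sum>j<K. Xv i j * b j)) - (mu + (\<Sum>j<K. (Xv i j - muX j) * \<beta> j)) = (\<Sum>k<r. Zv i k * \<phi> k)"
    if i: "i < N" for i
  proof -
    have "mu + (\<Sum>j<K. (Xv i j - muX j) * \<beta> j) = (mu - (\<Sum>j<K. muX j * \<beta> j)) + (\<Sum>j<K. Xv i j * \<beta> j)"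
      by (simp add: left_diff_distrib sum_subtractf)
    then show ?thesis unfolding phi_th using pred[OF i, of a b] pred[OF i, of "mu - (\<Sum>j<K. muX j * \<beta> j)" \<beta>]
      by (simp add: right_diff_distrib sum_subtractf)
  qed
  define S where "S = {i. i < N \<and> wv i = 1}"
  define res where "res i = Yo i - a - (\<Sum>j<K. Xv i j * b j)" for i
  have res_eq: "res i = U i - (\<Sum>l<r. Zv i l * \<phi> l)" if "i < N" "wv i = 1" for i
    using diff[OF that(1)] Yob[OF that] unfolding res_def U_def by simp
  have NE0: "(\<Sum>i\<in>S. res i) = 0" using ols_normal(1)[OF ols] unfolding S_def res_def .
  have NEj: "(\<Sum>i\<in>S. res i * Xv i j) = 0" if "j < K" for j
    using ols_normal(2)[OF ols that] unfolding S_def res_def .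
  show "(\<Sum>i<N. wv i * (U i - (\<Sum>l<r. Zv i l * \<phi> l)) * Zv i k) = 0" if k: "k < r" for k
  proof -
    have "(\<Sum>i<N. wv i * (U i - (\<Sum>l<r. Zv i l * \<phi> l)) * Zv i k) = (\<Sum>i<N. wv i * (res i * Zv i k))"
    proof (rule sum.cong[OF refl])
      fix i assume "i \<in> {..<N}"
      then have i: "i < N" by simp
      show "wv i * (U i - (\<Sum>l<r. Zv i l * \<phi> l)) * Zv i k = wv i * (res i * Zv i k)"
        using w01[OF i] res_eq[OF i] by auto
    qed
    also have "\<dots> = (\<Sum>i\<in>S. res i * Zv i k)" unfolding S_def by (rule sum_S[symmetric]) (rule w01)
    also have "\<dots> = (\<Sum>i\<in>S. \<Sum>j<Suc K. t k j * (res i * (if j = 0 then 1 else if j \<le> K then Xv i (j - 1) else 0)))"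
    proof (rule sum.cong[OF refl])
      fix i assume "i \<in> S" then have i: "i < N" unfolding S_def by simp
      show "res i * Zv i k = (\<Sum>j<Suc K. t k j * (res i * (if j = 0 then 1 else if j \<le> K then Xv i (j - 1) else 0)))"
        unfolding Zdef[OF i k] sum_distrib_left by (rule sum.cong) (simp_all add: mult_ac)
    qed
    also have "\<dots> = (\<Sum>j<Suc K. t k j * (\<Sum>i\<in>S. res i * (if j = 0 then 1 else if j \<le> K then Xv i (j - 1) else 0)))"
      by (subst sum.swap) (simp add: sum_distrib_left)
    also have "\<dots> = 0"
    proof (rule sum.neutral, rule ballI)
      fix j assume "j \<in> {..<Suc K}"
      then have jK: "j \<le> K" by simp
      have "(\<Sum>i\<in>S. res i * (if j = 0 then 1 else if j \<le> K then Xv i (j - 1) else 0)) = 0"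
      proof (cases "j = 0")
        case True then show ?thesis using NE0 by simp
      next
        case False
        then have "j - 1 < K" using jK by simp
        then show ?thesis using NEj[of "j - 1"] False jK by simp
      qed
      then show "t k j * (\<Sum>i\<in>S. res i * (if j = 0 then 1 else if j \<le> K then Xv i (j - 1) else 0)) = 0" by simp
    qed
    finally show ?thesis .
  qed
  define sN where "sN = sqrt (real N)"
  have sN: "sN > 0" unfolding sN_def using N by simp
  have sNN: "sN * sN = real N" unfolding sN_def by simp
  have gen: "sN * (x / real N) = (1 / sN) * x" for x
    unfolding sNN[symmetric] using sN by (simp add: field_simps)
  have avg: "a + (\<Sum>j<K. ((\<Sum>i<N. Xv i j) / real N) * b j) = (\<Sum>i<N. a + (\<Sum>j<K. Xv i j * b j)) / real N"
  proof -
    have "(\<Sum>i<N. a + (\<Sum>j<K. Xv i j * b j)) = real N * a + (\<Sum>i<N. \<Sum>j<K. Xv i j * b j)"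
      by (simp add: sum.distrib)
    also have "(\<Sum>i<N. \<Sum>j<K. Xv i j * b j) = (\<Sum>j<K. \<Sum>i<N. Xv i j * b j)" by (rule sum.swap)
    also have "\<dots> = (\<Sum>j<K. (\<Sum>i<N. Xv i j) * b j)" by (simp add: sum_distrib_right)
    finally have e1: "(\<Sum>i<N. a + (\<Sum>j<K. Xv i j * b j)) = real N * a + (\<Sum>j<K. (\<Sum>i<N. Xv i j) * b j)" .
    have e2: "(\<Sum>j<K. ((\<Sum>i<N. Xv i j) / real N) * b j) = (\<Sum>j<K. (\<Sum>i<N. Xv i j) * b j) / real N"
      by (simp only: times_divide_eq_left sum_divide_distrib[symmetric])
    show ?thesis unfolding e1 e2 using N by (simp add: field_simps)
  qed
  have mu_avg: "mu + (\<Sum>i<N. \<Sum>j<K. (Xv i j - muX j) * \<beta> j) / real N = (\<Sum>i<N. mu + (\<Sum>j<K. (Xv i j - muX j) * \<beta> j)) / real N"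
    using N by (simp add: sum.distrib field_simps)
  have "sN * ((a + (\<Sum>j<K. ((\<Sum>i<N. Xv i j) / real N) * b j)) - mu)
           - (1 / sN) * (\<Sum>i<N. (\<Sum>j<K. (Xv i j - muX j) * \<beta> j) + wv i * U i / \<rho>)
        = sN * ((\<Sum>i<N. a + (\<Sum>j<K. Xv i j * b j)) / real N - (mu + (\<Sum>i<N. \<Sum>j<K. (Xv i j - muX j) * \<beta> j) / real N))
           - (1 / sN) * (\<Sum>i<N. wv i * U i) / \<rho>"
  proof -
    have "sN * ((\<Sum>i<N. \<Sum>j<K. (Xv i j - muX j) * \<beta> j) / real N) = (1 / sN) * (\<Sum>i<N. \<Sum>j<K. (Xv i j - muX j) * \<beta> j)"
      by (rule gen)
    then show ?thesis unfolding avg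
      by (simp add: sum.distrib right_diff_distrib distrib_left sum_divide_distrib[symmetric] algebra_simps)
  qed
  also have "(\<Sum>i<N. a + (\<Sum>j<K. Xv i j * b j)) / real N - (mu + (\<Sum>i<N. \<Sum>j<K. (Xv i j - muX j) * \<beta> j) / real N)
      = (\<Sum>i<N. \<Sum>k<r. Zv i k * \<phi> k) / real N"
    unfolding mu_avg using diff by (simp add: diff_divide_distrib[symmetric] sum_subtractf[symmetric])
  also have "sN * ((\<Sum>i<N. \<Sum>k<r. Zv i k * \<phi> k) / real N) = (\<Sum>k<r. \<phi> k * ((1 / sN) * (\<Sum>i<N. Zv i k)))"
  proof -
    have s1: "sN * ((\<Sum>i<N. \<Sum>k<r. Zv i k * \<phi> k) / real N) = (1 / sN) * (\<Sum>i<N. \<Sum>k<r. Zv i k * \<phi> k)"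
      by (rule gen)
    have s2: "(\<Sum>i<N. \<Sum>k<r. Zv i k * \<phi> k) = (\<Sum>k<r. \<Sum>i<N. Zv i k * \<phi> k)" by (rule sum.swap)
    have s3: "(\<Sum>k<r. \<Sum>i<N. Zv i k * \<phi> k) = (\<Sum>k<r. \<phi> k * (\<Sum>i<N. Zv i k))"
      by (rule sum.cong[OF refl]) (simp add: sum_distrib_left mult.commute)
    have s4: "(1 / sN) * (\<Sum>k<r. \<phi> k * (\<Sum>i<N. Zv i k)) = (\<Sum>k<r. \<phi> k * ((1 / sN) * (\<Sum>i<N. Zv i k)))"
      unfolding sum_distrib_left by (rule sum.cong) simp_all
    show ?thesis using s1 s2 s3 s4 by simp
  qed
  finally show "sqrt (real N) * ((a + (\<Sum>j<K. ((\<Sum>i<N. Xv i j) / real N) * b j)) - mu)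
           - (1 / sqrt (real N)) * (\<Sum>i<N. (\<Sum>j<K. (Xv i j - muX j) * \<beta> j) + wv i * U i / \<rho>)
         = (\<Sum>k<r. \<phi> k * ((1 / sqrt (real N)) * (\<Sum>i<N. Zv i k))) - (1 / sqrt (real N)) * (\<Sum>i<N. wv i * U i) / \<rho>"
    unfolding sN_def .
qed




lemma US_w: assumes g: "g \<in> {1..G}" shows "(\<lambda>x. fst x g) \<in> borel_measurable (unit_space G K)"
  unfolding unit_space_def
  using measurable_compose[OF measurable_fst measurable_component_singleton[OF g]] by simp

lemma YX_y: assumes g: "g \<in> {1..G}"
  shows "(\<lambda>x. fst x g) \<in> borel_measurable (PiM {1..G} (\<lambda>_. borel) \<Otimes>\<^sub>M PiM {..<K} (\<lambda>_. borel))"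
  using measurable_compose[OF measurable_fst[of "PiM {1..G} (\<lambda>_. borel)" "PiM {..<K} (\<lambda>_. borel)"] measurable_component_singleton[OF g, of "\<lambda>_. borel"]] by simp

lemma YX_x: assumes j: "j < K"
  shows "(\<lambda>x. snd x j) \<in> borel_measurable (PiM {1..G} (\<lambda>_. borel) \<Otimes>\<^sub>M PiM {..<K} (\<lambda>_. borel))"
proof -
  have j': "j \<in> {..<K}" using j by simp
  show ?thesis
    using measurable_compose[OF measurable_snd[of "PiM {1..G} (\<lambda>_. borel)" "PiM {..<K} (\<lambda>_. borel)"] measurable_component_singleton[OF j', of "\<lambda>_. borel"]] by simp
qed


theorem theorem2:
  fixes M :: "'a measure" and G K :: nat
    and W Y X :: "nat \<Rightarrow> 'a \<Rightarrow> nat \<Rightarrow> real"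
    and beta :: "nat \<Rightarrow> nat \<Rightarrow> real"
    and ahat :: "nat \<Rightarrow> nat \<Rightarrow> 'a \<Rightarrow> real"
    and bhat :: "nat \<Rightarrow> nat \<Rightarrow> 'a \<Rightarrow> nat \<Rightarrow> real"
  defines "rho \<equiv> \<lambda>g. measure M {\<omega>\<in>space M. W 0 \<omega> g = 1}"
    and "mu \<equiv> \<lambda>g. \<integral>\<omega>. Y 0 \<omega> g \<partial>M"
    and "muX \<equiv> \<lambda>j. \<integral>\<omega>. X 0 \<omega> j \<partial>M"
  assumes P: "prob_space M"
    and G2: "G \<ge> 2"
    and meas: "\<And>i. unit_data G K W Y X i \<in> measurable M (unit_space G K)"
    and indep: "prob_space.indep_vars M (\<lambda>_. unit_space G K) (unit_data G K W Y X) UNIV"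
    and ident: "\<And>i. distr M (unit_space G K) (unit_data G K W Y X i)
                     = distr M (unit_space G K) (unit_data G K W Y X 0)"
    and Wvals: "\<And>i. AE \<omega> in M. (\<forall>g\<in>{1..G}. W i \<omega> g = 0 \<or> W i \<omega> g = 1) \<and> (\<Sum>g\<in>{1..G}. W i \<omega> g) = 1"
    and rho_pos: "\<And>g. g \<in> {1..G} \<Longrightarrow> rho g > 0"
    and Windep: "\<And>i. prob_space.indep_set M
                   (sigma_sets (space M) {(\<lambda>\<omega>. restrict (W i \<omega>) {1..G}) -` A \<inter> space M
                      | A. A \<in> sets (PiM {1..G} (\<lambda>_. borel))})
                   (sigma_sets (space M) {(\<lambda>\<omega>. (restrict (Y i \<omega>) {1..G}, restrict (X i \<omega>) {..<K})) -` A \<inter> space M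
                      | A. A \<in> sets (PiM {1..G} (\<lambda>_. borel) \<Otimes>\<^sub>M PiM {..<K} (\<lambda>_. borel))})"
    and Y2: "\<And>g. g \<in> {1..G} \<Longrightarrow> integrable M (\<lambda>\<omega>. (Y 0 \<omega> g)\<^sup>2)"
    and X2: "\<And>j. j < K \<Longrightarrow> integrable M (\<lambda>\<omega>. (X 0 \<omega> j)\<^sup>2)"
    and beta: "\<And>g. g \<in> {1..G} \<Longrightarrow>
                 is_lin_proj M K (\<lambda>\<omega> j. X 0 \<omega> j - muX j) (\<lambda>\<omega>. Y 0 \<omega> g - mu g) (beta g)"
    and ols: "\<And>N g \<omega>. g \<in> {1..G} \<Longrightarrow> \<omega> \<in> space M \<Longrightarrow>
                 is_ols_sub G K W Y X N g \<omega> (ahat N g \<omega>) (bhat N g \<omega>)"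
  shows "\<forall>g\<in>{1..G}. o_p1 M (\<lambda>N \<omega>.
           sqrt (real N) * ((ahat N g \<omega> + (\<Sum>j<K. ((\<Sum>i<N. X i \<omega> j) / real N) * bhat N g \<omega> j)) - mu g)
           - (1 / sqrt (real N)) * (\<Sum>i<N.
                 (\<Sum>j<K. (X i \<omega> j - muX j) * beta g j)
               + W i \<omega> g * (Y i \<omega> g - mu g - (\<Sum>j<K. (X i \<omega> j - muX j) * beta g j)) / rho g))"
proof (intro ballI)
  fix g assume g: "g \<in> {1..G}"
  interpret prob_space M by (rule P)
  define D where "D = unit_data G K W Y X"
  define US where "US = unit_space G K"
  define YXS where "YXS = (PiM {1..G} (\<lambda>_. borel) \<Otimes>\<^sub>M PiM {..<K} (\<lambda>_. borel) :: ((nat \<Rightarrow> real) \<times> (nat \<Rightarrow> real)) measure)"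
  have Dm: "D i \<in> measurable M US" for i using meas unfolding D_def US_def .
  have Dind: "indep_vars (\<lambda>_. US) D UNIV" using indep unfolding D_def US_def .
  have Did: "distr M US (D i) = distr M US (D 0)" for i using ident unfolding D_def US_def .
  have Dw: "fst (D i \<omega>) g = W i \<omega> g" for i \<omega> using g unfolding D_def unit_data_def by simp
  have Dy: "fst (snd (D i \<omega>)) g = Y i \<omega> g" for i \<omega> using g unfolding D_def unit_data_def by simp
  have Dx: "snd (snd (D i \<omega>)) j = X i \<omega> j" if "j < K" for i \<omega> j using that unfolding D_def unit_data_def by simp
  have msnd: "snd \<in> measurable US YXS" unfolding US_def YXS_def by (rule snd_meas)
  have mw: "(\<lambda>x. fst x g) \<in> borel_measurable US" unfolding US_def by (rule US_w[OF g])
  have my: "(\<lambda>yx. fst yx g) \<in> borel_measurable YXS" unfolding YXS_def by (rule YX_y[OF g])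
  have mx: "(\<lambda>yx. snd yx j) \<in> borel_measurable YXS" if "j < K" for j unfolding YXS_def by (rule YX_x[OF that])
  have mD0: "(\<lambda>\<omega>. h (snd (D i \<omega>))) \<in> borel_measurable M" if "h \<in> borel_measurable YXS" for h i
    using measurable_compose[OF measurable_compose[OF Dm msnd] that] .
  have mWi: "(\<lambda>\<omega>. W i \<omega> g) \<in> borel_measurable M" for i
    using measurable_compose[OF Dm mw] unfolding Dw .
  define Fs where "Fs j yx = (if j = 0 then 1 else if j \<le> K then snd yx (j - 1) else (0::real))"
    for j and yx :: "(nat \<Rightarrow> real) \<times> (nat \<Rightarrow> real)"
  have mFs: "Fs j \<in> borel_measurable YXS" for j
  proof (cases "j = 0 \<or> K < j")
    case True then have "Fs j = (\<lambda>yx. if j = 0 then 1 else 0)" unfolding Fs_def by (auto simp: fun_eq_iff)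
    then show ?thesis by simp
  next
    case False then have "Fs j = (\<lambda>yx. snd yx (j - 1))" and jK: "j - 1 < K" unfolding Fs_def by (auto simp: fun_eq_iff)
    then show ?thesis using mx[OF jK] by simp
  qed
  define F0 where "F0 j \<omega> = Fs j (snd (D 0 \<omega>))" for j \<omega>
  have L2F0: "L2 M (F0 j)" for j
  proof -
    have m: "F0 j \<in> borel_measurable M" unfolding F0_def by (rule mD0[OF mFs])
    show ?thesis
    proof (cases "j = 0 \<or> K < j")
      case True then have "F0 j = (\<lambda>\<omega>. if j = 0 then 1 else 0)" unfolding F0_def Fs_def by (auto simp: fun_eq_iff)
      then show ?thesis unfolding L2_def by simp
    next
      case False then have jK: "j - 1 < K" by auto
      have "F0 j = (\<lambda>\<omega>. X 0 \<omega> (j - 1))" using False Dx[OF jK] unfolding F0_def Fs_def by (auto simp: fun_eq_iff)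
      then show ?thesis unfolding L2_def using m X2[OF jK] by simp
    qed
  qed
  obtain r t c where
    O: "\<forall>k<r. \<forall>l<r. expectation (\<lambda>x. Zc F0 t (Suc K) k x * Zc F0 t (Suc K) l x) = (if k = l then 1 else 0)"
    and R: "\<forall>j<Suc K. AE x in M. F0 j x = (\<Sum>k<r. c j k * Zc F0 t (Suc K) k x)"
    and T: "\<forall>k j. j \<ge> Suc K \<longrightarrow> t k j = 0"
    and I: "Suc K > 0 \<longrightarrow> expectation (\<lambda>x. (F0 0 x)\<^sup>2) = 1 \<longrightarrow> r > 0 \<and> (\<forall>j. t 0 j = (if j = 0 then 1 else 0))"
    using gram_schmidt[where Fb=F0 and m="Suc K", OF L2F0] by (elim exE conjE) (rule that)
  have E1: "expectation (\<lambda>x. (F0 0 x)\<^sup>2) = 1" unfolding F0_def Fs_def by (simp add: prob_space)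
  have r0: "r > 0" using I E1 by simp
  have t0: "t 0 j = (if j = 0 then 1 else 0)" for j using I E1 by simp
  define Zs where "Zs k yx = (\<Sum>j<Suc K. t k j * Fs j yx)" for k yx
  have ZcZ: "Zc F0 t (Suc K) k \<omega> = Zs k (snd (D 0 \<omega>))" for k \<omega> unfolding Zc_def Zs_def F0_def ..
  have Zs0: "Zs 0 yx = 1" for yx
  proof -
    have "Zs 0 yx = (\<Sum>j<Suc K. (if j = 0 then Fs j yx else 0))" unfolding Zs_def t0 by (rule sum.cong) auto
    also have "\<dots> = Fs 0 yx" by simp
    finally show ?thesis unfolding Fs_def by simp
  qed
  have mZs: "Zs k \<in> borel_measurable YXS" for k
    unfolding Zs_def by (intro borel_measurable_sum borel_measurable_times borel_measurable_const mFs)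
  have L2Z: "L2 M (\<lambda>\<omega>. Zs k (snd (D 0 \<omega>)))" for k
  proof -
    have "(\<lambda>\<omega>. Zs k (snd (D 0 \<omega>))) = (\<lambda>\<omega>. \<Sum>j<Suc K. t k j * F0 j \<omega>)" unfolding Zs_def F0_def ..
    then show ?thesis by (simp only:) (rule L2_sum, simp, rule L2_scale, rule L2F0)
  qed
  define Us where "Us yx = fst yx g - mu g - (\<Sum>j<K. (snd yx j - muX j) * beta g j)" for yx :: "(nat \<Rightarrow> real) \<times> (nat \<Rightarrow> real)"
  have mUs: "Us \<in> borel_measurable YXS"
    unfolding Us_def by (intro borel_measurable_diff borel_measurable_sum borel_measurable_times borel_measurable_const my mx) auto
  have U0: "Us (snd (D i \<omega>)) = Y i \<omega> g - mu g - (\<Sum>j<K. (X i \<omega> j - muX j) * beta g j)" for i \<omega>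
    unfolding Us_def Dy by (simp add: Dx)
  have L2Y: "L2 M (\<lambda>\<omega>. Y 0 \<omega> g)"
    unfolding L2_def using mD0[OF my, of 0] Y2[OF g] unfolding Dy by simp
  have L2X: "L2 M (\<lambda>\<omega>. X 0 \<omega> j)" if "j < K" for j
    unfolding L2_def using mD0[OF mx[OF that], of 0] X2[OF that] unfolding Dx[OF that] by simp
  have L2c: "L2 M (\<lambda>x. c)" for c :: real unfolding L2_def by simp
  have L2Xc: "L2 M (\<lambda>\<omega>. (X 0 \<omega> j - muX j) * beta g j)" if "j < K" for j
    using L2_scale[OF L2_diff[OF L2X[OF that] L2c], of "beta g j"] by (simp add: mult.commute)
  have L2U: "L2 M (\<lambda>\<omega>. Us (snd (D 0 \<omega>)))"
    unfolding U0 by (intro L2_diff L2Y L2c L2_sum L2Xc) auto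
  note mWi[measurable]
  have W01: "AE \<omega> in M. W 0 \<omega> g = 0 \<or> W 0 \<omega> g = 1"
    using Wvals[of 0] by eventually_elim (use g in auto)
  have iW: "integrable M (\<lambda>\<omega>. W 0 \<omega> g)"
  proof (rule integrable_const_bound[where B=1])
    show "AE x in M. norm (W 0 x g) \<le> 1" using W01 by eventually_elim auto
  qed (rule mWi)
  have EW: "expectation (\<lambda>\<omega>. W 0 \<omega> g) = rho g"
  proof -
    define A where "A = {\<omega>\<in>space M. W 0 \<omega> g = 1}"
    have As: "A \<in> sets M" unfolding A_def by measurable
    have "AE \<omega> in M. W 0 \<omega> g = indicator A \<omega>"
      using W01 AE_space by eventually_elim (auto simp: A_def indicator_def)
    then have "expectation (\<lambda>\<omega>. W 0 \<omega> g) = expectation (indicator A)"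
      by (intro integral_cong_AE) (use As in auto)
    also have "\<dots> = measure M A" using As by simp
    finally show ?thesis unfolding A_def rho_def .
  qed
  have iY: "integrable M (\<lambda>\<omega>. Y 0 \<omega> g)" using L2Y square_integrable_imp_integrable unfolding L2_def by blast
  have iX: "integrable M (\<lambda>\<omega>. X 0 \<omega> j)" if "j < K" for j
    using L2X[OF that] square_integrable_imp_integrable unfolding L2_def by blast
  have iU: "integrable M (\<lambda>\<omega>. Us (snd (D 0 \<omega>)))" using L2U square_integrable_imp_integrable unfolding L2_def by blast
  have EU: "expectation (\<lambda>\<omega>. Us (snd (D 0 \<omega>))) = 0"
  proof -
    have iXc: "integrable M (\<lambda>\<omega>. (X 0 \<omega> j - muX j) * beta g j)" if "j < K" for j
      using iX[OF that] by simp
    have iS: "integrable M (\<lambda>\<omega>. \<Sum>j<K. (X 0 \<omega> j - muX j) * beta g j)"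
      using iXc by (intro Bochner_Integration.integrable_sum) auto
    have eS: "expectation (\<lambda>\<omega>. \<Sum>j<K. (X 0 \<omega> j - muX j) * beta g j) = (\<Sum>j<K. (expectation (\<lambda>\<omega>. X 0 \<omega> j) - muX j) * beta g j)"
    proof -
      have "expectation (\<lambda>\<omega>. \<Sum>j<K. (X 0 \<omega> j - muX j) * beta g j) = (\<Sum>j<K. expectation (\<lambda>\<omega>. (X 0 \<omega> j - muX j) * beta g j))"
        using iXc by (intro Bochner_Integration.integral_sum) auto
      also have "\<dots> = (\<Sum>j<K. (expectation (\<lambda>\<omega>. X 0 \<omega> j) - muX j) * beta g j)"
        using iX by (intro sum.cong) (auto simp: prob_space)
      finally show ?thesis .
    qed
    have "expectation (\<lambda>\<omega>. Us (snd (D 0 \<omega>))) = expectation (\<lambda>\<omega>. Y 0 \<omega> g) - mu g - (\<Sum>j<K. (expectation (\<lambda>\<omega>. X 0 \<omega> j) - muX j) * beta g j)"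
      unfolding U0 eS[symmetric] using iY iS by (simp add: prob_space)
    then show ?thesis unfolding mu_def muX_def by simp
  qed
  have FOC: "expectation (\<lambda>\<omega>. Us (snd (D 0 \<omega>)) * (X 0 \<omega> j - muX j)) = 0" if j: "j < K" for j
  proof -
    have LV': "L2 M (\<lambda>\<omega>. X 0 \<omega> j' - muX j')" if "j' < K" for j'
      by (rule L2_diff[OF L2X[OF that] L2c])
    have "(\<integral>\<omega>. ((Y 0 \<omega> g - mu g) - (\<Sum>j'<K. (X 0 \<omega> j' - muX j') * beta g j')) * (X 0 \<omega> j - muX j) \<partial>M) = 0"
      by (rule lin_proj_foc[OF P beta[OF g] L2_diff[OF L2Y L2c] LV' j])
    then show ?thesis unfolding U0 by simp
  qed
  have EUF: "expectation (\<lambda>\<omega>. Us (snd (D 0 \<omega>)) * F0 j \<omega>) = 0" if j: "j < Suc K" for j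
  proof (cases "j = 0")
    case True then show ?thesis using EU unfolding F0_def Fs_def by simp
  next
    case False
    then have jK: "j - 1 < K" using j by simp
    have "F0 j = (\<lambda>\<omega>. X 0 \<omega> (j - 1))" using False j Dx[OF jK] unfolding F0_def Fs_def by (auto simp: fun_eq_iff)
    then have eq: "(\<lambda>\<omega>. Us (snd (D 0 \<omega>)) * F0 j \<omega>) = (\<lambda>\<omega>. Us (snd (D 0 \<omega>)) * (X 0 \<omega> (j - 1) - muX (j - 1)) + muX (j - 1) * Us (snd (D 0 \<omega>)))"
      by (auto simp: fun_eq_iff algebra_simps)
    have i1: "integrable M (\<lambda>\<omega>. Us (snd (D 0 \<omega>)) * (X 0 \<omega> (j - 1) - muX (j - 1)))"
      by (rule L2_mult[OF L2U L2_diff[OF L2X[OF jK] L2c]])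
    show ?thesis unfolding eq using FOC[OF jK] EU iU i1 by simp
  qed
  have EUZ: "expectation (\<lambda>\<omega>. Us (snd (D 0 \<omega>)) * Zs k (snd (D 0 \<omega>))) = 0" for k
  proof -
    have "expectation (\<lambda>\<omega>. Us (snd (D 0 \<omega>)) * Zs k (snd (D 0 \<omega>))) = expectation (\<lambda>\<omega>. (\<Sum>j<Suc K. t k j * F0 j \<omega>) * Us (snd (D 0 \<omega>)))"
      unfolding Zs_def F0_def by (simp only: mult.commute)
    also have "\<dots> = (\<Sum>j<Suc K. t k j * expectation (\<lambda>\<omega>. F0 j \<omega> * Us (snd (D 0 \<omega>))))"
      by (rule lin_comb_integral) (auto intro: L2F0 L2U)
    also have "\<dots> = 0"
    proof (rule sum.neutral, rule ballI)
      fix j assume "j \<in> {..<Suc K}"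
      then have "expectation (\<lambda>\<omega>. Us (snd (D 0 \<omega>)) * F0 j \<omega>) = 0" using EUF by simp
      then show "t k j * expectation (\<lambda>\<omega>. F0 j \<omega> * Us (snd (D 0 \<omega>))) = 0" by (simp add: mult.commute)
    qed
    finally show ?thesis .
  qed
  have EZZ: "expectation (\<lambda>\<omega>. Zs k (snd (D 0 \<omega>)) * Zs l (snd (D 0 \<omega>))) = (if k = l then 1 else 0)" if "k < r" "l < r" for k l
    using O that unfolding ZcZ by simp
  have EZ: "expectation (\<lambda>\<omega>. Zs k (snd (D 0 \<omega>))) = 0" if "k \<in> {1..<r}" for k
    using EZZ[of k 0] that r0 by (simp add: Zs0)
  have IND: "integrable M (\<lambda>\<omega>. W 0 \<omega> g * h (snd (D 0 \<omega>))) \<and> expectation (\<lambda>\<omega>. W 0 \<omega> g * h (snd (D 0 \<omega>))) = rho g * expectation (\<lambda>\<omega>. h (snd (D 0 \<omega>)))"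
    if h: "h \<in> borel_measurable YXS" and ih: "integrable M (\<lambda>\<omega>. h (snd (D 0 \<omega>)))" for h
    using indep_W_YX[OF P meas[of 0] Windep[of 0] g h[unfolded YXS_def] iW ih[unfolded D_def]] EW unfolding D_def by simp
  have mUsU: "(\<lambda>x. Us (snd x)) \<in> borel_measurable US" using measurable_compose[OF msnd mUs] .
  have mZsU: "(\<lambda>x. Zs k (snd x)) \<in> borel_measurable US" for k using measurable_compose[OF msnd mZs] .
  define fA where "fA x = fst x g * Us (snd x)" for x :: "(nat \<Rightarrow> real) \<times> (nat \<Rightarrow> real) \<times> (nat \<Rightarrow> real)"
  define fD where "fD k x = Zs k (snd x)" for k and x :: "(nat \<Rightarrow> real) \<times> (nat \<Rightarrow> real) \<times> (nat \<Rightarrow> real)"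
  define fB where "fB k x = fst x g * Zs k (snd x)" for k and x :: "(nat \<Rightarrow> real) \<times> (nat \<Rightarrow> real) \<times> (nat \<Rightarrow> real)"
  define fM where "fM k l x = fst x g * (Zs k (snd x) * Zs l (snd x))" for k l and x :: "(nat \<Rightarrow> real) \<times> (nat \<Rightarrow> real) \<times> (nat \<Rightarrow> real)"
  define fC where "fC k x = fst x g * (Us (snd x) * Zs k (snd x))" for k and x :: "(nat \<Rightarrow> real) \<times> (nat \<Rightarrow> real) \<times> (nat \<Rightarrow> real)"
  have mfA: "fA \<in> borel_measurable US" unfolding fA_def by (rule borel_measurable_times[OF mw mUsU])
  have mfD: "fD k \<in> borel_measurable US" for k unfolding fD_def by (rule mZsU)
  have mfB: "fB k \<in> borel_measurable US" for k unfolding fB_def by (rule borel_measurable_times[OF mw mZsU])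
  have mfM: "fM k l \<in> borel_measurable US" for k l unfolding fM_def
    by (rule borel_measurable_times[OF mw borel_measurable_times[OF mZsU mZsU]])
  have mfC: "fC k \<in> borel_measurable US" for k unfolding fC_def
    by (rule borel_measurable_times[OF mw borel_measurable_times[OF mUsU mZsU]])
  have mZk: "(\<lambda>yx. Zs k yx * Zs l yx) \<in> borel_measurable YXS" for k l by (rule borel_measurable_times[OF mZs mZs])
  have mUZ: "(\<lambda>yx. Us yx * Zs k yx) \<in> borel_measurable YXS" for k by (rule borel_measurable_times[OF mUs mZs])
  have AEw: "AE \<omega> in M. \<bar>W 0 \<omega> g\<bar> \<le> 1" using W01 by eventually_elim auto
  have sqA: "integrable M (\<lambda>\<omega>. (fA (D 0 \<omega>))\<^sup>2)"
  proof (rule Bochner_Integration.integrable_bound)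
    show "integrable M (\<lambda>\<omega>. (Us (snd (D 0 \<omega>)))\<^sup>2)" using L2U unfolding L2_def by simp
    show "(\<lambda>\<omega>. (fA (D 0 \<omega>))\<^sup>2) \<in> borel_measurable M" using measurable_compose[OF Dm mfA] by simp
    show "AE \<omega> in M. norm ((fA (D 0 \<omega>))\<^sup>2) \<le> norm ((Us (snd (D 0 \<omega>)))\<^sup>2)"
      using W01 by eventually_elim (auto simp: fA_def Dw power_mult_distrib)
  qed
  have meanA: "expectation (\<lambda>\<omega>. fA (D 0 \<omega>)) = 0"
    using IND[OF mUs iU] EU unfolding fA_def Dw by simp
  have sqD: "integrable M (\<lambda>\<omega>. (fD k (D 0 \<omega>))\<^sup>2)" for k using L2Z unfolding L2_def fD_def by simp
  have meanD: "expectation (\<lambda>\<omega>. fD k (D 0 \<omega>)) = 0" if "k \<in> {1..<r}" for k using EZ[OF that] unfolding fD_def .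
  have iZ: "integrable M (\<lambda>\<omega>. Zs k (snd (D 0 \<omega>)))" for k
    using L2Z square_integrable_imp_integrable unfolding L2_def by blast
  have sqB: "integrable M (\<lambda>\<omega>. (fB k (D 0 \<omega>))\<^sup>2)" for k
  proof (rule Bochner_Integration.integrable_bound)
    show "integrable M (\<lambda>\<omega>. (Zs k (snd (D 0 \<omega>)))\<^sup>2)" using L2Z unfolding L2_def by simp
    show "(\<lambda>\<omega>. (fB k (D 0 \<omega>))\<^sup>2) \<in> borel_measurable M" using measurable_compose[OF Dm mfB] by simp
    show "AE \<omega> in M. norm ((fB k (D 0 \<omega>))\<^sup>2) \<le> norm ((Zs k (snd (D 0 \<omega>)))\<^sup>2)"
      using W01 by eventually_elim (auto simp: fB_def Dw power_mult_distrib)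
  qed
  have meanB: "expectation (\<lambda>\<omega>. fB k (D 0 \<omega>)) = 0" if "k \<in> {1..<r}" for k
    using IND[OF mZs iZ] EZ[OF that] unfolding fB_def Dw by simp
  have iZZ: "integrable M (\<lambda>\<omega>. Zs k (snd (D 0 \<omega>)) * Zs l (snd (D 0 \<omega>)))" for k l
    by (rule L2_mult[OF L2Z L2Z])
  have iUZ: "integrable M (\<lambda>\<omega>. Us (snd (D 0 \<omega>)) * Zs k (snd (D 0 \<omega>)))" for k
    by (rule L2_mult[OF L2U L2Z])
  have intM: "integrable M (\<lambda>\<omega>. fM k l (D 0 \<omega>))" for k l
    using IND[OF mZk iZZ] unfolding fM_def Dw by simp
  have meanM: "expectation (\<lambda>\<omega>. fM k l (D 0 \<omega>)) = (if k = l then rho g else 0)" if "k < r" "l < r" for k l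
    using IND[OF mZk iZZ] EZZ[OF that] unfolding fM_def Dw by simp
  have intC: "integrable M (\<lambda>\<omega>. fC k (D 0 \<omega>))" for k
    using IND[OF mUZ iUZ] unfolding fC_def Dw by simp
  have meanC: "expectation (\<lambda>\<omega>. fC k (D 0 \<omega>)) = 0" for k
    using IND[OF mUZ iUZ] EUZ unfolding fC_def Dw by simp
  define Tf where "Tf = (\<lambda>N \<omega>.
           sqrt (real N) * ((ahat N g \<omega> + (\<Sum>j<K. ((\<Sum>i<N. X i \<omega> j) / real N) * bhat N g \<omega> j)) - mu g)
           - (1 / sqrt (real N)) * (\<Sum>i<N.
                 (\<Sum>j<K. (X i \<omega> j - muX j) * beta g j)
               + W i \<omega> g * (Y i \<omega> g - mu g - (\<Sum>j<K. (X i \<omega> j - muX j) * beta g j)) / rho g))"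
  have mS: "(\<lambda>\<omega>. \<Sum>i<N. f (D i \<omega>)) \<in> borel_measurable M" if "f \<in> borel_measurable US" for f :: "(nat \<Rightarrow> real) \<times> (nat \<Rightarrow> real) \<times> (nat \<Rightarrow> real) \<Rightarrow> real" and N :: nat
    using borel_measurable_sum[of "{..<N}" "\<lambda>i \<omega>. f (D i \<omega>)" M] measurable_compose[OF Dm that] by simp
  have setm: "{\<omega>\<in>space M. a < \<bar>h \<omega>\<bar>} \<in> sets M" if "h \<in> borel_measurable M" for h :: "'a \<Rightarrow> real" and a :: real
    by (rule borel_measurable_less[OF borel_measurable_const borel_measurable_abs[OF that]])
  have "o_p1 M Tf"
    unfolding o_p1_def
  proof (intro allI impI)
    fix \<epsilon> \<delta> :: real assume \<epsilon>: "\<epsilon> > 0" and \<delta>: "\<delta> > 0"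
    have \<rho>: "rho g > 0" using rho_pos[OF g] .
    define nE where "nE = 1 + 2 * real r + real r * real r + real r"
    have "0 \<le> real r * real r" by simp
    then have nE: "nE > 0" unfolding nE_def by linarith
    define \<delta>' where "\<delta>' = \<delta> / (2 * nE)"
    have \<delta>': "\<delta>' > 0" unfolding \<delta>'_def using \<delta> nE by simp
    obtain CA where CA: "CA > 0" "\<forall>N. prob {\<omega>\<in>space M. CA < \<bar>(1 / sqrt (real N)) * (\<Sum>i<N. fA (D i \<omega>))\<bar>} \<le> \<delta>'"
      using bip_D[OF Dm Dind Did mfA sqA meanA \<delta>'] by blast
    have "\<forall>k\<in>{1..<r}. \<exists>C. C > 0 \<and> (\<forall>N. prob {\<omega>\<in>space M. C < \<bar>(1 / sqrt (real N)) * (\<Sum>i<N. fD k (D i \<omega>))\<bar>} \<le> \<delta>')"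
    proof (rule ballI)
      fix k assume k: "k \<in> {1..<r}"
      show "\<exists>C. C > 0 \<and> (\<forall>N. prob {\<omega>\<in>space M. C < \<bar>(1 / sqrt (real N)) * (\<Sum>i<N. fD k (D i \<omega>))\<bar>} \<le> \<delta>')"
        using bip_D[OF Dm Dind Did mfD[of k] sqD[of k] meanD[OF k] \<delta>'] by blast
    qed
    from bchoice[OF this] obtain CD where CD: "\<forall>k\<in>{1..<r}. CD k > 0 \<and> (\<forall>N. prob {\<omega>\<in>space M. CD k < \<bar>(1 / sqrt (real N)) * (\<Sum>i<N. fD k (D i \<omega>))\<bar>} \<le> \<delta>')"
      by (elim exE) (rule that)
    have "\<forall>k\<in>{1..<r}. \<exists>C. C > 0 \<and> (\<forall>N. prob {\<omega>\<in>space M. C < \<bar>(1 / sqrt (real N)) * (\<Sum>i<N. fB k (D i \<omega>))\<bar>} \<le> \<delta>')"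
    proof (rule ballI)
      fix k assume k: "k \<in> {1..<r}"
      show "\<exists>C. C > 0 \<and> (\<forall>N. prob {\<omega>\<in>space M. C < \<bar>(1 / sqrt (real N)) * (\<Sum>i<N. fB k (D i \<omega>))\<bar>} \<le> \<delta>')"
        using bip_D[OF Dm Dind Did mfB[of k] sqB[of k] meanB[OF k] \<delta>'] by blast
    qed
    from bchoice[OF this] obtain CB where CB: "\<forall>k\<in>{1..<r}. CB k > 0 \<and> (\<forall>N. prob {\<omega>\<in>space M. CB k < \<bar>(1 / sqrt (real N)) * (\<Sum>i<N. fB k (D i \<omega>))\<bar>} \<le> \<delta>')"
      by (elim exE) (rule that)
    define C where "C = CA + (\<Sum>k\<in>{1..<r}. CD k + CB k)"
    have CDp: "CD k > 0" "CB k > 0" if "k \<in> {1..<r}" for k using CD CB that by auto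
    have sumnn: "0 \<le> (\<Sum>k\<in>{1..<r}. CD k + CB k)"
    proof (rule sum_nonneg)
      fix k assume k: "k \<in> {1..<r}" show "0 \<le> CD k + CB k" using CDp[OF k] by simp
    qed
    have CAle: "CA \<le> C" unfolding C_def using sumnn by simp
    have C0: "C \<ge> 0" using CAle CA by simp
    have CDle: "CD k \<le> C" "CB k \<le> C" if k: "k \<in> {1..<r}" for k
    proof -
      have "CD k + CB k \<le> (\<Sum>k\<in>{1..<r}. CD k + CB k)"
      proof (rule member_le_sum[OF k])
        fix x assume "x \<in> {1..<r} - {k}" then have x: "x \<in> {1..<r}" by simp
        show "0 \<le> CD x + CB x" using CDp[OF x] by simp
      qed simp
      then show "CD k \<le> C" "CB k \<le> C" unfolding C_def using CA(1) CDp[OF k] by linarith+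
    qed
    define K0 where "K0 = 2 * C / (rho g)\<^sup>2 + (2 * real r / rho g) * (C + 2 * C / rho g)"
    have K0: "K0 \<ge> 0" unfolding K0_def using C0 \<rho> by simp
    define \<eta> where "\<eta> = min (rho g / (2 * real r)) (\<epsilon> / (K0 + 1))"
    have \<eta>0: "\<eta> > 0" unfolding \<eta>_def using \<rho> r0 \<epsilon> K0 by simp
    have \<eta>r: "\<eta> * real r \<le> rho g / 2"
    proof -
      have "\<eta> * real r \<le> rho g / (2 * real r) * real r" unfolding \<eta>_def by (intro mult_right_mono) auto
      then show ?thesis using r0 by simp
    qed
    have \<eta>K: "\<eta> * K0 \<le> \<epsilon>"
    proof -
      have "\<eta> * K0 \<le> \<epsilon> / (K0 + 1) * K0" unfolding \<eta>_def using K0 by (intro mult_right_mono) auto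
      also have "\<dots> \<le> \<epsilon>" using K0 \<epsilon> by (simp add: field_simps)
      finally show ?thesis .
    qed
    have evM: "eventually (\<lambda>N. \<forall>kl\<in>{..<r}\<times>{..<r}. prob {\<omega>\<in>space M. \<eta> < \<bar>(\<Sum>i<N. fM (fst kl) (snd kl) (D i \<omega>)) / real N - expectation (\<lambda>\<omega>. fM (fst kl) (snd kl) (D 0 \<omega>))\<bar>} \<le> \<delta>') sequentially"
      by (rule eventually_ball_finite) (auto intro!: wlln_D[OF Dm Dind Did mfM intM \<eta>0 \<delta>'])
    have evC: "eventually (\<lambda>N. \<forall>k\<in>{..<r}. prob {\<omega>\<in>space M. \<eta> < \<bar>(\<Sum>i<N. fC k (D i \<omega>)) / real N - expectation (\<lambda>\<omega>. fC k (D 0 \<omega>))\<bar>} \<le> \<delta>') sequentially"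
      by (rule eventually_ball_finite) (auto intro!: wlln_D[OF Dm Dind Did mfC intC \<eta>0 \<delta>'])
    have ev1: "eventually (\<lambda>N. N \<ge> 1) sequentially" by (rule eventually_ge_at_top)
    obtain N0 where N0: "\<And>N. N \<ge> N0 \<Longrightarrow> N \<ge> 1 \<and> (\<forall>kl\<in>{..<r}\<times>{..<r}. prob {\<omega>\<in>space M. \<eta> < \<bar>(\<Sum>i<N. fM (fst kl) (snd kl) (D i \<omega>)) / real N - expectation (\<lambda>\<omega>. fM (fst kl) (snd kl) (D 0 \<omega>))\<bar>} \<le> \<delta>')
         \<and> (\<forall>k\<in>{..<r}. prob {\<omega>\<in>space M. \<eta> < \<bar>(\<Sum>i<N. fC k (D i \<omega>)) / real N - expectation (\<lambda>\<omega>. fC k (D 0 \<omega>))\<bar>} \<le> \<delta>')"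
      using eventually_conj[OF ev1 eventually_conj[OF evM evC]] unfolding eventually_sequentially by blast
    define GOOD where "GOOD i \<omega> \<longleftrightarrow> (\<forall>h\<in>{1..G}. W i \<omega> h = 0 \<or> W i \<omega> h = 1) \<and> (\<Sum>h\<in>{1..G}. W i \<omega> h) = 1
        \<and> (\<forall>j\<in>{..<Suc K}. Fs j (snd (D i \<omega>)) = (\<Sum>k<r. c j k * Zs k (snd (D i \<omega>))))" for i \<omega>
    have AErep0: "AE \<omega> in M. \<forall>j\<in>{..<Suc K}. Fs j (snd (D 0 \<omega>)) = (\<Sum>k<r. c j k * Zs k (snd (D 0 \<omega>)))"
    proof (rule AE_finite_allI)
      fix j assume "j \<in> {..<Suc K}"
      then show "AE \<omega> in M. Fs j (snd (D 0 \<omega>)) = (\<Sum>k<r. c j k * Zs k (snd (D 0 \<omega>)))"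
        using R unfolding F0_def ZcZ by simp
    qed simp
    have Psets: "{x\<in>space US. \<forall>j\<in>{..<Suc K}. Fs j (snd x) = (\<Sum>k<r. c j k * Zs k (snd x))} \<in> sets US"
    proof -
      have "Measurable.pred US (\<lambda>x. \<forall>j\<in>{..<Suc K}. Fs j (snd x) = (\<Sum>k<r. c j k * Zs k (snd x)))"
      proof (rule pred_intros_finite(3))
        fix j
        have mF: "(\<lambda>x. Fs j (snd x)) \<in> borel_measurable US" using measurable_compose[OF msnd mFs] .
        have mG: "(\<lambda>x. \<Sum>k<r. c j k * Zs k (snd x)) \<in> borel_measurable US"
          by (intro borel_measurable_sum borel_measurable_times borel_measurable_const mZsU)
        show "Measurable.pred US (\<lambda>x. Fs j (snd x) = (\<Sum>k<r. c j k * Zs k (snd x)))"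
          unfolding pred_def by (rule borel_measurable_eq[OF mF mG])
      qed simp
      then show ?thesis unfolding pred_def .
    qed
    have AErep: "AE \<omega> in M. \<forall>j\<in>{..<Suc K}. Fs j (snd (D i \<omega>)) = (\<Sum>k<r. c j k * Zs k (snd (D i \<omega>)))" for i
      by (rule AE_transfer[where D=D and S=US, OF Dm Did Psets AErep0])
    have AEgood: "AE \<omega> in M. \<forall>i. GOOD i \<omega>"
      unfolding AE_all_countable GOOD_def
    proof
      fix i show "AE \<omega> in M. (\<forall>h\<in>{1..G}. W i \<omega> h = 0 \<or> W i \<omega> h = 1) \<and> (\<Sum>h\<in>{1..G}. W i \<omega> h) = 1
        \<and> (\<forall>j\<in>{..<Suc K}. Fs j (snd (D i \<omega>)) = (\<Sum>k<r. c j k * Zs k (snd (D i \<omega>))))"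
        using Wvals[of i] AErep[of i] by eventually_elim simp
    qed
    obtain Nl where Nl: "{\<omega>\<in>space M. \<not> (\<forall>i. GOOD i \<omega>)} \<subseteq> Nl" "emeasure M Nl = 0" "Nl \<in> sets M"
      using AEgood by (rule AE_E)
    show "\<exists>N0. \<forall>N\<ge>N0. \<exists>A\<in>sets M. {\<omega>\<in>space M. \<epsilon> < \<bar>Tf N \<omega>\<bar>} \<subseteq> A \<and> measure M A < \<delta>"
    proof (intro exI[of _ N0] allI impI)
      fix N assume NN0: "N \<ge> N0"
      have N1: "N \<ge> 1" and evMN: "\<forall>kl\<in>{..<r}\<times>{..<r}. prob {\<omega>\<in>space M. \<eta> < \<bar>(\<Sum>i<N. fM (fst kl) (snd kl) (D i \<omega>)) / real N - expectation (\<lambda>\<omega>. fM (fst kl) (snd kl) (D 0 \<omega>))\<bar>} \<le> \<delta>'"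
        and evCN: "\<forall>k\<in>{..<r}. prob {\<omega>\<in>space M. \<eta> < \<bar>(\<Sum>i<N. fC k (D i \<omega>)) / real N - expectation (\<lambda>\<omega>. fC k (D 0 \<omega>))\<bar>} \<le> \<delta>'"
        using N0[OF NN0] by auto
      define BA where "BA = {\<omega>\<in>space M. CA < \<bar>(1 / sqrt (real N)) * (\<Sum>i<N. fA (D i \<omega>))\<bar>}"
      define BD where "BD k = {\<omega>\<in>space M. CD k < \<bar>(1 / sqrt (real N)) * (\<Sum>i<N. fD k (D i \<omega>))\<bar>}" for k
      define BB where "BB k = {\<omega>\<in>space M. CB k < \<bar>(1 / sqrt (real N)) * (\<Sum>i<N. fB k (D i \<omega>))\<bar>}" for k
      define BM where "BM kl = {\<omega>\<in>space M. \<eta> < \<bar>(\<Sum>i<N. fM (fst kl) (snd kl) (D i \<omega>)) / real N - expectation (\<lambda>\<omega>. fM (fst kl) (snd kl) (D 0 \<omega>))\<bar>}" for kl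
      define BC where "BC k = {\<omega>\<in>space M. \<eta> < \<bar>(\<Sum>i<N. fC k (D i \<omega>)) / real N - expectation (\<lambda>\<omega>. fC k (D 0 \<omega>))\<bar>}" for k
      define A where "A = Nl \<union> BA \<union> (\<Union>k\<in>{1..<r}. BD k) \<union> (\<Union>k\<in>{1..<r}. BB k) \<union> (\<Union>kl\<in>{..<r}\<times>{..<r}. BM kl) \<union> (\<Union>k\<in>{..<r}. BC k)"
      have mBA: "BA \<in> sets M" unfolding BA_def by (rule setm) (intro borel_measurable_times borel_measurable_const mS mfA)
      have mBD: "BD k \<in> sets M" for k unfolding BD_def by (rule setm) (intro borel_measurable_times borel_measurable_const mS mfD)
      have mBB: "BB k \<in> sets M" for k unfolding BB_def by (rule setm) (intro borel_measurable_times borel_measurable_const mS mfB)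
      have mBM: "BM kl \<in> sets M" for kl unfolding BM_def by (rule setm) (intro borel_measurable_diff borel_measurable_divide borel_measurable_const mS mfM)
      have mBC: "BC k \<in> sets M" for k unfolding BC_def by (rule setm) (intro borel_measurable_diff borel_measurable_divide borel_measurable_const mS mfC)
      have mU1: "(\<Union>k\<in>{1..<r}. BD k) \<in> sets M" using mBD by auto
      have mU2: "(\<Union>k\<in>{1..<r}. BB k) \<in> sets M" using mBB by auto
      have mU3: "(\<Union>kl\<in>{..<r}\<times>{..<r}. BM kl) \<in> sets M" using mBM by auto
      have mU4: "(\<Union>k\<in>{..<r}. BC k) \<in> sets M" using mBC by auto
      have Asets: "A \<in> sets M" unfolding A_def using Nl(3) mBA mU1 mU2 mU3 mU4 by auto
      have pNl: "measure M Nl = 0" using Nl(2) by (simp add: measure_def)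
      have pBA: "measure M BA \<le> \<delta>'" unfolding BA_def using CA(2) by simp
      have pU1: "measure M (\<Union>k\<in>{1..<r}. BD k) \<le> real r * \<delta>'"
      proof -
        have "measure M (\<Union>k\<in>{1..<r}. BD k) \<le> (\<Sum>k\<in>{1..<r}. measure M (BD k))"
          by (rule finite_measure_subadditive_finite) (use mBD in auto)
        also have "\<dots> \<le> (\<Sum>k\<in>{1..<r}. \<delta>')" by (rule sum_mono) (use CD in \<open>auto simp: BD_def\<close>)
        also have "\<dots> \<le> real r * \<delta>'" using \<delta>' by (simp add: mult_right_mono)
        finally show ?thesis .
      qed
      have pU2: "measure M (\<Union>k\<in>{1..<r}. BB k) \<le> real r * \<delta>'"
      proof -
        have "measure M (\<Union>k\<in>{1..<r}. BB k) \<le> (\<Sum>k\<in>{1..<r}. measure M (BB k))"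
          by (rule finite_measure_subadditive_finite) (use mBB in auto)
        also have "\<dots> \<le> (\<Sum>k\<in>{1..<r}. \<delta>')" by (rule sum_mono) (use CB in \<open>auto simp: BB_def\<close>)
        also have "\<dots> \<le> real r * \<delta>'" using \<delta>' by (simp add: mult_right_mono)
        finally show ?thesis .
      qed
      have pU3: "measure M (\<Union>kl\<in>{..<r}\<times>{..<r}. BM kl) \<le> real r * real r * \<delta>'"
      proof -
        have "measure M (\<Union>kl\<in>{..<r}\<times>{..<r}. BM kl) \<le> (\<Sum>kl\<in>{..<r}\<times>{..<r}. measure M (BM kl))"
          by (rule finite_measure_subadditive_finite) (use mBM in auto)
        also have "\<dots> \<le> (\<Sum>kl\<in>{..<r}\<times>{..<r}. \<delta>')" by (rule sum_mono) (use evMN in \<open>auto simp: BM_def\<close>)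
        also have "\<dots> = real r * real r * \<delta>'" by (simp add: card_cartesian_product)
        finally show ?thesis .
      qed
      have pU4: "measure M (\<Union>k\<in>{..<r}. BC k) \<le> real r * \<delta>'"
      proof -
        have "measure M (\<Union>k\<in>{..<r}. BC k) \<le> (\<Sum>k\<in>{..<r}. measure M (BC k))"
          by (rule finite_measure_subadditive_finite) (use mBC in auto)
        also have "\<dots> \<le> (\<Sum>k\<in>{..<r}. \<delta>')" by (rule sum_mono) (use evCN in \<open>auto simp: BC_def\<close>)
        also have "\<dots> = real r * \<delta>'" by simp
        finally show ?thesis .
      qed
      have pA: "measure M A < \<delta>"
      proof -
        have "measure M A \<le> measure M Nl + measure M BA + measure M (\<Union>k\<in>{1..<r}. BD k) + measure M (\<Union>k\<in>{1..<r}. BB k)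
              + measure M (\<Union>kl\<in>{..<r}\<times>{..<r}. BM kl) + measure M (\<Union>k\<in>{..<r}. BC k)"
          unfolding A_def
          by (intro order_trans[OF measure_Un_le] add_mono order_refl; use Nl(3) mBA mU1 mU2 mU3 mU4 in \<open>auto\<close>)
        also have "\<dots> \<le> 0 + \<delta>' + real r * \<delta>' + real r * \<delta>' + real r * real r * \<delta>' + real r * \<delta>'"
          using pNl pBA pU1 pU2 pU3 pU4 by linarith
        also have "\<dots> = nE * \<delta>'" unfolding nE_def by (simp add: algebra_simps)
        also have "\<dots> = \<delta> / 2" unfolding \<delta>'_def using nE by simp
        also have "\<dots> < \<delta>" using \<delta> by simp
        finally show ?thesis .
      qed
      have Aincl: "{\<omega>\<in>space M. \<epsilon> < \<bar>Tf N \<omega>\<bar>} \<subseteq> A"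
      proof (rule subsetI, rule ccontr)
        fix \<omega> assume om: "\<omega> \<in> {\<omega>\<in>space M. \<epsilon> < \<bar>Tf N \<omega>\<bar>}" and nA: "\<omega> \<notin> A"
        have \<omega>s: "\<omega> \<in> space M" and big: "\<epsilon> < \<bar>Tf N \<omega>\<bar>" using om by auto
        have good: "GOOD i \<omega>" for i using nA Nl(1) \<omega>s unfolding A_def by auto
        have gA: "\<bar>(1 / sqrt (real N)) * (\<Sum>i<N. fA (D i \<omega>))\<bar> \<le> CA" using nA \<omega>s unfolding A_def BA_def by auto
        have gD: "\<bar>(1 / sqrt (real N)) * (\<Sum>i<N. fD k (D i \<omega>))\<bar> \<le> CD k" if "k \<in> {1..<r}" for k
        proof -
          have "\<omega> \<notin> BD k" using nA that unfolding A_def by blast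
          then show ?thesis using \<omega>s unfolding BD_def by auto
        qed
        have gB: "\<bar>(1 / sqrt (real N)) * (\<Sum>i<N. fB k (D i \<omega>))\<bar> \<le> CB k" if "k \<in> {1..<r}" for k
        proof -
          have "\<omega> \<notin> BB k" using nA that unfolding A_def by blast
          then show ?thesis using \<omega>s unfolding BB_def by auto
        qed
        have gM: "\<bar>(\<Sum>i<N. fM k l (D i \<omega>)) / real N - expectation (\<lambda>\<omega>. fM k l (D 0 \<omega>))\<bar> \<le> \<eta>" if "k < r" "l < r" for k l
        proof -
          have "(k, l) \<in> {..<r}\<times>{..<r}" using that by simp
          then have "\<omega> \<notin> BM (k, l)" using nA unfolding A_def by blast
          then show ?thesis using \<omega>s unfolding BM_def by auto
        qed
        have gC: "\<bar>(\<Sum>i<N. fC k (D i \<omega>)) / real N - expectation (\<lambda>\<omega>. fC k (D 0 \<omega>))\<bar> \<le> \<eta>" if "k < r" for k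
        proof -
          have "\<omega> \<notin> BC k" using nA that unfolding A_def by blast
          then show ?thesis using \<omega>s unfolding BC_def by auto
        qed
        have w01: "W i \<omega> g = 0 \<or> W i \<omega> g = 1" if "i < N" for i using good[of i] g unfolding GOOD_def by auto
        have Yob: "Yobs G W Y i \<omega> = Y i \<omega> g" if "i < N" "W i \<omega> g = 1" for i
          using good[of i] that g unfolding GOOD_def Yobs_def by (intro Yobs_sel) auto
        have Zv0: "Zs 0 (snd (D i \<omega>)) = 1" if "i < N" for i by (rule Zs0)
        have repr: "X i \<omega> j = (\<Sum>k<r. c (Suc j) k * Zs k (snd (D i \<omega>)))" if "i < N" "j < K" for i j
        proof -
          have "Fs (Suc j) (snd (D i \<omega>)) = (\<Sum>k<r. c (Suc j) k * Zs k (snd (D i \<omega>)))"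
            using good[of i] that unfolding GOOD_def by auto
          moreover have "Fs (Suc j) (snd (D i \<omega>)) = X i \<omega> j" unfolding Fs_def using that Dx[OF that(2)] by simp
          ultimately show ?thesis by simp
        qed
        have Zdef: "Zs k (snd (D i \<omega>)) = (\<Sum>j<Suc K. t k j * (if j = 0 then 1 else if j \<le> K then X i \<omega> (j - 1) else 0))"
          if "i < N" "k < r" for i k
          unfolding Zs_def
        proof (rule sum.cong[OF refl])
          fix j assume "j \<in> {..<Suc K}"
          show "t k j * Fs j (snd (D i \<omega>)) = t k j * (if j = 0 then 1 else if j \<le> K then X i \<omega> (j - 1) else 0)"
          proof (cases "j = 0 \<or> K < j")
            case True then show ?thesis unfolding Fs_def by auto
          next
            case False then have "j - 1 < K" by auto
            then show ?thesis unfolding Fs_def using False Dx by auto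
          qed
        qed
        have ols\<omega>: "\<forall>a' b'. (\<Sum>i\<in>{i. i < N \<and> W i \<omega> g = 1}. (Yobs G W Y i \<omega> - ahat N g \<omega> - (\<Sum>j<K. X i \<omega> j * bhat N g \<omega> j))\<^sup>2)
             \<le> (\<Sum>i\<in>{i. i < N \<and> W i \<omega> g = 1}. (Yobs G W Y i \<omega> - a' - (\<Sum>j<K. X i \<omega> j * b' j))\<^sup>2)"
          using ols[OF g \<omega>s] unfolding is_ols_sub_def .
        define Uv where "Uv i = Y i \<omega> g - mu g - (\<Sum>j<K. (X i \<omega> j - muX j) * beta g j)" for i
        define \<phi> where "\<phi> l = ((if l = 0 then ahat N g \<omega> else 0) + (\<Sum>j<K. bhat N g \<omega> j * c (Suc j) l))
              - ((if l = 0 then mu g - (\<Sum>j<K. muX j * beta g j) else 0) + (\<Sum>j<K. beta g j * c (Suc j) l))" for l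
        have Npos: "N > 0" using N1 by simp
        note br1 = bridge(1)[where N=N and r=r and wv="\<lambda>i. W i \<omega> g" and Yv="\<lambda>i. Y i \<omega> g" and Yo="\<lambda>i. Yobs G W Y i \<omega>"
              and Xv="\<lambda>i j. X i \<omega> j" and Zv="\<lambda>i k. Zs k (snd (D i \<omega>))" and c=c and t=t and a="ahat N g \<omega>"
              and b="bhat N g \<omega>" and mu="mu g" and \<beta>="beta g" and muX=muX and K=K,
              OF Npos r0 w01 Yob Zv0 repr Zdef ols\<omega>]
        note br2 = bridge(2)[where N=N and r=r and wv="\<lambda>i. W i \<omega> g" and Yv="\<lambda>i. Y i \<omega> g" and Yo="\<lambda>i. Yobs G W Y i \<omega>"
              and Xv="\<lambda>i j. X i \<omega> j" and Zv="\<lambda>i k. Zs k (snd (D i \<omega>))" and c=c and t=t and a="ahat N g \<omega>"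
              and b="bhat N g \<omega>" and mu="mu g" and \<beta>="beta g" and muX=muX and \<rho>="rho g" and K=K,
              OF Npos r0 w01 Yob Zv0 repr Zdef ols\<omega>]
        have NE: "(\<Sum>i<N. W i \<omega> g * (Uv i - (\<Sum>l<r. Zs l (snd (D i \<omega>)) * \<phi> l)) * Zs k (snd (D i \<omega>))) = 0" if "k < r" for k
          unfolding Uv_def \<phi>_def by (rule br1) (simp_all add: that)
        have Teq: "Tf N \<omega> = (\<Sum>k<r. \<phi> k * ((1 / sqrt (real N)) * (\<Sum>i<N. Zs k (snd (D i \<omega>))))) - (1 / sqrt (real N)) * (\<Sum>i<N. W i \<omega> g * Uv i) / rho g"
          unfolding Tf_def Uv_def \<phi>_def by (rule br2) simp_all
        have UvU: "Uv i = Us (snd (D i \<omega>))" for i unfolding Uv_def U0 ..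
        have hM: "\<bar>(\<Sum>i<N. W i \<omega> g * Zs k (snd (D i \<omega>)) * Zs l (snd (D i \<omega>))) / real N - (if k = l then rho g else 0)\<bar> \<le> \<eta>"
          if "k < r" "l < r" for k l
          using gM[OF that] meanM[OF that] unfolding fM_def Dw by (simp add: mult.assoc)
        have hc: "\<bar>(\<Sum>i<N. W i \<omega> g * Uv i * Zs k (snd (D i \<omega>))) / real N\<bar> \<le> \<eta>" if "k < r" for k
          using gC[OF that] meanC unfolding fC_def Dw UvU by (simp add: mult.assoc)
        have hA: "\<bar>(1 / sqrt (real N)) * (\<Sum>i<N. W i \<omega> g * Uv i)\<bar> \<le> C"
          using gA CAle unfolding fA_def Dw UvU by simp
        have hD: "\<bar>(1 / sqrt (real N)) * (\<Sum>i<N. Zs k (snd (D i \<omega>)))\<bar> \<le> C" if "k \<in> {1..<r}" for k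
          using gD[OF that] CDle[OF that] unfolding fD_def by simp
        have hB: "\<bar>(1 / sqrt (real N)) * (\<Sum>i<N. W i \<omega> g * Zs k (snd (D i \<omega>)))\<bar> \<le> C" if "k \<in> {1..<r}" for k
          using gB[OF that] CDle[OF that] unfolding fB_def Dw by simp
        have \<eta>ge: "\<eta> \<ge> 0" using \<eta>0 by simp
        have Z0: "Zs 0 (snd (D i \<omega>)) = 1" if "i < N" for i by (rule Zs0)
        have bnd: "\<bar>(\<Sum>k<r. \<phi> k * ((1 / sqrt (real N)) * (\<Sum>i<N. Zs k (snd (D i \<omega>))))) - (1 / sqrt (real N)) * (\<Sum>i<N. W i \<omega> g * Uv i) / rho g\<bar>
            \<le> 2 * C * \<eta> / (rho g)\<^sup>2 + (2 * real r * \<eta> / rho g) * (C + 2 * C / rho g)"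
          by (rule det_bound[where N=N and r=r and \<rho>="rho g" and \<eta>=\<eta> and C=C and w="\<lambda>i. W i \<omega> g" and U=Uv
                and Z="\<lambda>i k. Zs k (snd (D i \<omega>))" and \<phi>=\<phi>, OF Npos r0 \<rho> \<eta>ge \<eta>r C0 Z0 NE hM hc hA hD hB])
        have "2 * C * \<eta> / (rho g)\<^sup>2 + (2 * real r * \<eta> / rho g) * (C + 2 * C / rho g) = \<eta> * K0"
          unfolding K0_def using \<rho> by (simp add: field_simps)
        then have "\<bar>Tf N \<omega>\<bar> \<le> \<epsilon>" using bnd \<eta>K unfolding Teq by linarith
        then show False using big by linarith
      qed
      show "\<exists>A\<in>sets M. {\<omega>\<in>space M. \<epsilon> < \<bar>Tf N \<omega>\<bar>} \<subseteq> A \<and> measure M A < \<delta>"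
        using Asets Aincl pA by blast
    qed
  qed
  then show "o_p1 M (\<lambda>N \<omega>.
           sqrt (real N) * ((ahat N g \<omega> + (\<Sum>j<K. ((\<Sum>i<N. X i \<omega> j) / real N) * bhat N g \<omega> j)) - mu g)
           - (1 / sqrt (real N)) * (\<Sum>i<N.
                 (\<Sum>j<K. (X i \<omega> j - muX j) * beta g j)
               + W i \<omega> g * (Y i \<omega> g - mu g - (\<Sum>j<K. (X i \<omega> j - muX j) * beta g j)) / rho g))" unfolding Tf_def .
qed


end
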